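(* Let $\Omega\subset\mathbb{R}^N$ be an open bounded domain with smooth boundary, $s\in(0,1)$, $N>2s$, and if $s\in(0,\tfrac12)$ assume $\Omega$ convex. Let $q>0$, $\gamma>0$, $0\le f,\mu\in L^1(\Omega)$, and let $K\in C^\theta_{\mathrm{loc}}(\Omega)$, $\theta\in(0,1)$, satisfy $C_1\delta^{-\beta}\le K\le C_2\delta^{-\beta}$ in $\Omega$ with $C_1,C_2>0$, $0\le\beta<2s$, where either $0<\frac{\beta}{s}+q<1$, or $\frac{\beta}{s}+q>1$ with $2\beta+q(2s-1)<2s+1$. For each $n\in\mathbb{N}$ let $f_n=T_n(f)$, $\mu_n=T_n(\mu)$, and let $w_n\in X_0^s(\Omega)\cap\mathcal{C}_q$ be a weak energy solution of $$(-\Delta)^s w_n=K(x)w_n^{-q}+\frac{f_n(x)}{(w_n+\frac1n)^\gamma}+\mu_n\ \text{in }\Omega,\quad w_n>0\ \text{in }\Omega,\quad w_n=0\ \text{in }\mathbb{R}^N\setminus\Omega.$$ Then for every $k>0$: (i) if $0<\gamma\le1$, $\{T_k(w_n)\}_{n\ge1}$ is bounded in $X_0^s(\Omega)$; (ii) if $\gamma>1$, $\{T_k^{\frac{\gamma+1}{2}}(w_n)\}_{n\ge1}$ is bounded in $X_0^s(\Omega)$ and $\{T_k(w_n)\}_{n\ge1}$ is bounded in $X^s_{\mathrm{loc}}(\Omega)$.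
   Context: $\delta(x)=\mathrm{dist}(x,\partial\Omega)$; $(-\Delta)^s$ is the fractional Laplacian. $X_0^s(\Omega)$: measurable $u$ on $\mathbb{R}^N$, $u=0$ a.e. outside $\Omega$, with $\|u\|_{X_0^s}^2=\iint_{D_\Omega}\frac{|u(x)-u(y)|^2}{|x-y|^{N+2s}}dxdy<\infty$, $D_\Omega=\mathbb{R}^{2N}\setminus(\Omega^c\times\Omega^c)$. $X^s_{\mathrm{loc}}(\Omega)$: functions $u$ with $u\phi\in X_0^s(\Omega)$ for all $\phi\in C_c^\infty(\Omega)$ (boundedness meaning boundedness of $\{u_n\phi\}$ in $X_0^s(\Omega)$ for each such $\phi$). $T_k(t)=\max(-k,\min(k,t))$. $\mathcal{C}_q$ is the set of $u\in L^\infty(\Omega)$ for which there exist $k_1,k_2>0$ with $k_1\delta^s\le u\le k_2\delta^s$ if $0<\frac\beta s+q<1$, and $k_1\delta^{\frac{2s-\beta}{q+1}}\le u\le k_2\delta^{\frac{2s-\beta}{q+1}}$ if $\frac\beta s+q>1$. A weak energy solution $w\in X_0^s(\Omega)$ is one that is bounded below by a positive constant on each compact subset of $\Omega$, vanishes outside $\Omega$, and satisfies $\int_{\mathbb{R}^N}(-\Delta)^{s/2}w\,(-\Delta)^{s/2}\phi\,dx=\int_\Omega(\text{right-hand side})\phi\,dx$ for all $\phi\in X_0^s(\Omega)$. *)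

theory Defs
  imports "HOL-Analysis.Analysis"
begin

definition trunc :: "real \<Rightarrow> real \<Rightarrow> real" where
  "trunc k t = max (- k) (min k t)"

fun Ck_on :: "nat \<Rightarrow> ('a::euclidean_space \<Rightarrow> real) \<Rightarrow> 'a set \<Rightarrow> bool" where
  "Ck_on 0 f S = continuous_on S f"
| "Ck_on (Suc k) f S = (f differentiable_on S \<and>
      (\<forall>i\<in>Basis. Ck_on k (\<lambda>x. frechet_derivative f (at x) i) S))"

definition smooth_on :: "('a::euclidean_space \<Rightarrow> real) \<Rightarrow> 'a set \<Rightarrow> bool" where
  "smooth_on f S = (\<forall>k. Ck_on k f S)"

definition smooth_boundary :: "'a::euclidean_space set \<Rightarrow> bool" where
  "smooth_boundary \<Omega> = (\<exists>\<rho>. smooth_on \<rho> UNIV \<and> \<Omega> = {x. \<rho> x < 0} \<and>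
      (\<forall>x. \<rho> x = 0 \<longrightarrow> frechet_derivative \<rho> (at x) \<noteq> (\<lambda>v. 0)))"

definition Cc_inf :: "'a::euclidean_space set \<Rightarrow> ('a \<Rightarrow> real) \<Rightarrow> bool" where
  "Cc_inf \<Omega> \<phi> = (smooth_on \<phi> UNIV \<and> compact (closure {x. \<phi> x \<noteq> 0})
      \<and> closure {x. \<phi> x \<noteq> 0} \<subseteq> \<Omega>)"

definition holder_loc :: "real \<Rightarrow> 'a::euclidean_space set \<Rightarrow> ('a \<Rightarrow> real) \<Rightarrow> bool" where
  "holder_loc \<theta> \<Omega> K = (continuous_on \<Omega> K \<and>
      (\<forall>C. compact C \<and> C \<subseteq> \<Omega> \<longrightarrow>
         (\<exists>L. \<forall>x\<in>C. \<forall>y\<in>C. \<bar>K x - K y\<bar> \<le> L * dist x y powr \<theta>)))"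

definition bdist :: "'a::euclidean_space set \<Rightarrow> 'a \<Rightarrow> real" where
  "bdist \<Omega> x = infdist x (frontier \<Omega>)"

definition D_set :: "'a::euclidean_space set \<Rightarrow> ('a \<times> 'a) set" where
  "D_set \<Omega> = UNIV - ((- \<Omega>) \<times> (- \<Omega>))"

definition gag_sq :: "real \<Rightarrow> 'a::euclidean_space set \<Rightarrow> ('a \<Rightarrow> real) \<Rightarrow> ennreal" where
  "gag_sq s \<Omega> u = (\<integral>\<^sup>+ z. indicator (D_set \<Omega>) z *
      ennreal ((u (fst z) - u (snd z))\<^sup>2 / norm (fst z - snd z) powr (real DIM('a) + 2 * s))
      \<partial>(lebesgue \<Otimes>\<^sub>M lebesgue))"

definition X0 :: "real \<Rightarrow> 'a::euclidean_space set \<Rightarrow> ('a \<Rightarrow> real) \<Rightarrow> bool" where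
  "X0 s \<Omega> u = (u \<in> borel_measurable lebesgue \<and> (AE x in lebesgue. x \<notin> \<Omega> \<longrightarrow> u x = 0)
      \<and> gag_sq s \<Omega> u < \<infinity>)"

definition X0_norm :: "real \<Rightarrow> 'a::euclidean_space set \<Rightarrow> ('a \<Rightarrow> real) \<Rightarrow> real" where
  "X0_norm s \<Omega> u = sqrt (enn2real (gag_sq s \<Omega> u))"

definition bounded_X0 :: "real \<Rightarrow> 'a::euclidean_space set \<Rightarrow> (nat \<Rightarrow> 'a \<Rightarrow> real) \<Rightarrow> bool" where
  "bounded_X0 s \<Omega> u = (\<exists>M. \<forall>n\<ge>1. X0 s \<Omega> (u n) \<and> X0_norm s \<Omega> (u n) \<le> M)"

definition bounded_Xloc :: "real \<Rightarrow> 'a::euclidean_space set \<Rightarrow> (nat \<Rightarrow> 'a \<Rightarrow> real) \<Rightarrow> bool" where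
  "bounded_Xloc s \<Omega> u = (\<forall>\<phi>. Cc_inf \<Omega> \<phi> \<longrightarrow> bounded_X0 s \<Omega> (\<lambda>n x. u n x * \<phi> x))"

definition CNs :: "nat \<Rightarrow> real \<Rightarrow> real" where
  "CNs N s = s * 2 powr (2 * s) * Gamma (real N / 2 + s) / (pi powr (real N / 2) * Gamma (1 - s))"

(* int (-Delta)^{s/2} w (-Delta)^{s/2} phi = C(N,s)/2 * double integral *)
definition frac_form :: "real \<Rightarrow> ('a::euclidean_space \<Rightarrow> real) \<Rightarrow> ('a \<Rightarrow> real) \<Rightarrow> real" where
  "frac_form s w \<phi> = CNs DIM('a) s / 2 * (\<integral> z. (w (fst z) - w (snd z)) * (\<phi> (fst z) - \<phi> (snd z))
      / norm (fst z - snd z) powr (real DIM('a) + 2 * s) \<partial>(lebesgue \<Otimes>\<^sub>M lebesgue))"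

definition weak_energy_sol :: "real \<Rightarrow> 'a::euclidean_space set \<Rightarrow> ('a \<Rightarrow> real \<Rightarrow> real) \<Rightarrow> ('a \<Rightarrow> real) \<Rightarrow> bool" where
  "weak_energy_sol s \<Omega> F w = (X0 s \<Omega> w \<and>
      (\<forall>C. compact C \<and> C \<subseteq> \<Omega> \<longrightarrow> (\<exists>c>0. AE x in lebesgue. x \<in> C \<longrightarrow> w x \<ge> c)) \<and>
      (\<forall>x. x \<notin> \<Omega> \<longrightarrow> w x = 0) \<and>
      (\<forall>\<phi>. X0 s \<Omega> \<phi> \<longrightarrow> set_integrable lebesgue \<Omega> (\<lambda>x. F x (w x) * \<phi> x) \<and>
          frac_form s w \<phi> = (\<integral>x\<in>\<Omega>. F x (w x) * \<phi> x \<partial>lebesgue)))"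

definition class_C :: "real \<Rightarrow> real \<Rightarrow> real \<Rightarrow> 'a::euclidean_space set \<Rightarrow> ('a \<Rightarrow> real) \<Rightarrow> bool" where
  "class_C s \<beta> q \<Omega> u = (u \<in> borel_measurable lebesgue \<and>
      (\<exists>B. AE x in lebesgue. x \<in> \<Omega> \<longrightarrow> \<bar>u x\<bar> \<le> B) \<and>
      (\<exists>k1>0. \<exists>k2>0.
        (0 < \<beta> / s + q \<and> \<beta> / s + q < 1 \<longrightarrow>
           (AE x in lebesgue. x \<in> \<Omega> \<longrightarrow> k1 * bdist \<Omega> x powr s \<le> u x \<and> u x \<le> k2 * bdist \<Omega> x powr s)) \<and>
        (\<beta> / s + q > 1 \<longrightarrow>
           (AE x in lebesgue. x \<in> \<Omega> \<longrightarrow>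
              k1 * bdist \<Omega> x powr ((2 * s - \<beta>) / (q + 1)) \<le> u x \<and>
              u x \<le> k2 * bdist \<Omega> x powr ((2 * s - \<beta>) / (q + 1))))))"

end

theory Submission
  imports Defs
begin

lemma sigma_finite_lebesgue: "sigma_finite_measure (lebesgue :: 'a::euclidean_space measure)"
proof
  show "\<exists>A. countable A \<and> A \<subseteq> sets (lebesgue::'a measure) \<and> \<Union> A = space lebesgue \<and> (\<forall>a\<in>A. emeasure lebesgue a \<noteq> \<infinity>)"
  proof (intro exI conjI)
    show "countable (range (\<lambda>n::nat. ball (0::'a) (real n)))" by simp
    show "range (\<lambda>n::nat. ball (0::'a) (real n)) \<subseteq> sets lebesgue" by auto
    show "\<Union> (range (\<lambda>n::nat. ball (0::'a) (real n))) = space lebesgue"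
      by (auto simp: real_arch_simple) (metis reals_Archimedean2)
    show "\<forall>a\<in>range (\<lambda>n::nat. ball (0::'a) (real n)). emeasure lebesgue a \<noteq> \<infinity>"
      using emeasure_lborel_ball_finite[of "0::'a"] by (auto simp: emeasure_completion less_top)
  qed
qed

interpretation leb: sigma_finite_measure "lebesgue :: 'a::euclidean_space measure"
  by (rule sigma_finite_lebesgue)

interpretation leb_pair: pair_sigma_finite "lebesgue :: 'a::euclidean_space measure" "lebesgue :: 'a measure" ..

abbreviation MM :: "('a::euclidean_space \<times> 'a) measure" where
  "MM \<equiv> lebesgue \<Otimes>\<^sub>M lebesgue"

lemma AE_pair_both:
  fixes P :: "'a::euclidean_space \<Rightarrow> bool"
  assumes "AE x in lebesgue. P x"
  shows "AE z in MM. P (fst z) \<and> P (snd z)"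
proof -
  obtain N where N: "N \<in> null_sets lebesgue" "{x \<in> space lebesgue. \<not> P x} \<subseteq> N"
    using assms unfolding eventually_ae_filter by blast
  have "N \<times> UNIV \<in> null_sets MM" using N(1) by (intro leb.times_in_null_sets1) auto
  moreover have "UNIV \<times> N \<in> null_sets MM" using N(1) by (intro leb.times_in_null_sets2) auto
  ultimately have "N \<times> UNIV \<union> UNIV \<times> N \<in> null_sets MM" by auto
  moreover have "{z \<in> space MM. \<not> (P (fst z) \<and> P (snd z))} \<subseteq> N \<times> UNIV \<union> UNIV \<times> N"
    using N(2) by auto
  ultimately show ?thesis by (rule AE_I')
qed

lemma meas_fst: "u \<in> borel_measurable lebesgue \<Longrightarrow> (\<lambda>z. u (fst z)) \<in> borel_measurable MM"
  using measurable_compose[OF measurable_fst] by blast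
lemma meas_snd: "u \<in> borel_measurable lebesgue \<Longrightarrow> (\<lambda>z. u (snd z)) \<in> borel_measurable MM"
  using measurable_compose[OF measurable_snd] by blast

lemma meas_id_leb: "(\<lambda>x::'a::euclidean_space. x) \<in> lebesgue \<rightarrow>\<^sub>M borel"
  by (simp add: measurable_completion)

lemma meas_diff_pair[measurable]: "(\<lambda>z::'a::euclidean_space\<times>'a. fst z - snd z) \<in> borel_measurable MM"
proof -
  have "(\<lambda>z::'a\<times>'a. fst z) \<in> borel_measurable MM"
    using meas_fst[OF meas_id_leb] by simp
  moreover have "(\<lambda>z::'a\<times>'a. snd z) \<in> borel_measurable MM"
    using meas_snd[OF meas_id_leb] by simp
  ultimately show ?thesis by measurable
qed

lemma meas_ker[measurable]: "(\<lambda>z::'a::euclidean_space\<times>'a. norm (fst z - snd z) powr c) \<in> borel_measurable MM"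
  by measurable

lemma D_set_meas: "\<Omega> \<in> sets lebesgue \<Longrightarrow> D_set \<Omega> \<in> sets MM"
proof -
  assume h: "\<Omega> \<in> sets lebesgue"
  have c: "- \<Omega> \<in> sets lebesgue" using sets.compl_sets[OF h] by (simp add: Compl_eq_Diff_UNIV)
  have "(- \<Omega>) \<times> (- \<Omega>) \<in> sets MM" using c by (intro pair_measureI) auto
  then have "space MM - (- \<Omega>) \<times> (- \<Omega>) \<in> sets MM" by auto
  then show ?thesis by (simp add: D_set_def space_pair_measure)
qed

lemma D_set_iff: "z \<in> D_set \<Omega> \<longleftrightarrow> fst z \<in> \<Omega> \<or> snd z \<in> \<Omega>"
  by (cases z) (auto simp: D_set_def)

lemma ennreal_ind_mult: "ennreal (indicator A x * y) = indicator A x * ennreal y"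
  by (auto simp: indicator_def)

lemma ennreal_lin2: "A \<ge> 0 \<Longrightarrow> B \<ge> 0 \<Longrightarrow> X \<ge> 0 \<Longrightarrow> Y \<ge> 0 \<Longrightarrow>
  ennreal (A * X + B * Y) = ennreal A * ennreal X + ennreal B * ennreal Y"
  by (simp add: ennreal_plus ennreal_mult)

lemma gag_le2:
  fixes u v \<phi> :: "'a::euclidean_space \<Rightarrow> real"
  assumes \<Omega>: "\<Omega> \<in> sets lebesgue"
    and [measurable]: "u \<in> borel_measurable lebesgue" "v \<in> borel_measurable lebesgue" "\<phi> \<in> borel_measurable lebesgue"
    and AB: "A \<ge> 0" "B \<ge> 0"
    and pt: "AE z in MM. z \<in> D_set \<Omega> \<longrightarrow> (v (fst z) - v (snd z))\<^sup>2 \<le> A * (u (fst z) - u (snd z))\<^sup>2 + B * (\<phi> (fst z) - \<phi> (snd z))\<^sup>2"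
  shows "gag_sq s \<Omega> v \<le> ennreal A * gag_sq s \<Omega> u + ennreal B * gag_sq s \<Omega> \<phi>"
proof -
  let ?k = "\<lambda>z::'a\<times>'a. norm (fst z - snd z) powr (real DIM('a) + 2 * s)"
  let ?g = "\<lambda>u z. indicator (D_set \<Omega>) z * ennreal ((u (fst z) - u (snd z))\<^sup>2 / ?k z)"
  have [measurable]: "D_set \<Omega> \<in> sets MM" using \<Omega> by (rule D_set_meas)
  have m: "(\<lambda>z. ?g u z) \<in> borel_measurable MM" if "u \<in> borel_measurable lebesgue" for u
  proof -
    have [measurable]: "(\<lambda>z. u (fst z)) \<in> borel_measurable MM" "(\<lambda>z. u (snd z)) \<in> borel_measurable MM"
      using that by (auto intro: meas_fst meas_snd)
    show ?thesis by measurable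
  qed
  have "gag_sq s \<Omega> v = (\<integral>\<^sup>+z. ?g v z \<partial>MM)" by (simp add: gag_sq_def)
  also have "\<dots> \<le> (\<integral>\<^sup>+z. ennreal A * ?g u z + ennreal B * ?g \<phi> z \<partial>MM)"
  proof (rule nn_integral_mono_AE)
    show "AE z in MM. ?g v z \<le> ennreal A * ?g u z + ennreal B * ?g \<phi> z"
      using pt
    proof eventually_elim
      case (elim z)
      show ?case
      proof (cases "z \<in> D_set \<Omega>")
        case True
        have k0: "?k z \<ge> 0" by simp
        have "(v (fst z) - v (snd z))\<^sup>2 / ?k z \<le> (A * (u (fst z) - u (snd z))\<^sup>2 + B * (\<phi> (fst z) - \<phi> (snd z))\<^sup>2) / ?k z"
          using elim True k0 by (intro divide_right_mono) auto
        also have "\<dots> = A * ((u (fst z) - u (snd z))\<^sup>2 / ?k z) + B * ((\<phi> (fst z) - \<phi> (snd z))\<^sup>2 / ?k z)"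
          by (simp add: add_divide_distrib)
        finally have "ennreal ((v (fst z) - v (snd z))\<^sup>2 / ?k z) \<le> ennreal (A * ((u (fst z) - u (snd z))\<^sup>2 / ?k z) + B * ((\<phi> (fst z) - \<phi> (snd z))\<^sup>2 / ?k z))"
          by (rule ennreal_leI)
        also have "\<dots> = ennreal A * ennreal ((u (fst z) - u (snd z))\<^sup>2 / ?k z) + ennreal B * ennreal ((\<phi> (fst z) - \<phi> (snd z))\<^sup>2 / ?k z)"
          using AB k0 by (intro ennreal_lin2) auto
        finally have "ennreal ((v (fst z) - v (snd z))\<^sup>2 / ?k z) \<le> ennreal A * ennreal ((u (fst z) - u (snd z))\<^sup>2 / ?k z) + ennreal B * ennreal ((\<phi> (fst z) - \<phi> (snd z))\<^sup>2 / ?k z)" .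
        then show ?thesis using True by (simp only: indicator_simps mult_1)
      qed simp
    qed
  qed
  also have "\<dots> = (\<integral>\<^sup>+z. ennreal A * ?g u z \<partial>MM) + (\<integral>\<^sup>+z. ennreal B * ?g \<phi> z \<partial>MM)"
    by (rule nn_integral_add) (auto intro!: borel_measurable_times_ennreal m)
  also have "\<dots> = ennreal A * (\<integral>\<^sup>+z. ?g u z \<partial>MM) + ennreal B * (\<integral>\<^sup>+z. ?g \<phi> z \<partial>MM)"
    by (subst nn_integral_cmult, rule m, simp)+ (rule refl)
  also have "\<dots> = ennreal A * gag_sq s \<Omega> u + ennreal B * gag_sq s \<Omega> \<phi>" by (simp add: gag_sq_def)
  finally show ?thesis .
qed

lemma X0_comp:
  fixes u v :: "'a::euclidean_space \<Rightarrow> real"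
  assumes \<Omega>: "\<Omega> \<in> sets lebesgue" and u: "X0 s \<Omega> u"
    and v: "v \<in> borel_measurable lebesgue" "AE x in lebesgue. x \<notin> \<Omega> \<longrightarrow> v x = 0"
    and A: "A \<ge> 0"
    and pt: "AE z in MM. z \<in> D_set \<Omega> \<longrightarrow> (v (fst z) - v (snd z))\<^sup>2 \<le> A * (u (fst z) - u (snd z))\<^sup>2"
  shows "X0 s \<Omega> v" "gag_sq s \<Omega> v \<le> ennreal A * gag_sq s \<Omega> u"
proof -
  have um: "u \<in> borel_measurable lebesgue" using u by (simp add: X0_def)
  have "gag_sq s \<Omega> v \<le> ennreal A * gag_sq s \<Omega> u + ennreal 0 * gag_sq s \<Omega> u"
    using pt by (intro gag_le2[OF \<Omega> um v(1) um A]) auto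
  then show g: "gag_sq s \<Omega> v \<le> ennreal A * gag_sq s \<Omega> u" by simp
  have "gag_sq s \<Omega> u < \<infinity>" using u by (simp add: X0_def)
  then have "ennreal A * gag_sq s \<Omega> u < \<infinity>" by (simp add: ennreal_mult_less_top)
  then show "X0 s \<Omega> v" using g v by (auto simp: X0_def)
qed

lemma gI_integrable:
  fixes u :: "'a::euclidean_space \<Rightarrow> real"
  assumes \<Omega>: "\<Omega> \<in> sets lebesgue" and u: "X0 s \<Omega> u"
  shows "integrable MM (\<lambda>z. indicator (D_set \<Omega>) z * ((u (fst z) - u (snd z))\<^sup>2 / norm (fst z - snd z) powr (real DIM('a) + 2 * s)))"
    (is "integrable MM ?f")
  and "integral\<^sup>L MM (\<lambda>z. indicator (D_set \<Omega>) z * ((u (fst z) - u (snd z))\<^sup>2 / norm (fst z - snd z) powr (real DIM('a) + 2 * s)))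
        = enn2real (gag_sq s \<Omega> u)"
proof -
  have [measurable]: "D_set \<Omega> \<in> sets MM" using \<Omega> by (rule D_set_meas)
  have um: "u \<in> borel_measurable lebesgue" using u by (simp add: X0_def)
  have [measurable]: "(\<lambda>z. u (fst z)) \<in> borel_measurable MM" "(\<lambda>z. u (snd z)) \<in> borel_measurable MM"
    using um by (auto intro: meas_fst meas_snd)
  have fm: "?f \<in> borel_measurable MM" by measurable
  have nn: "\<And>z. ?f z \<ge> 0" by (auto intro!: mult_nonneg_nonneg divide_nonneg_nonneg)
  have eq: "(\<integral>\<^sup>+z. ennreal (?f z) \<partial>MM) = gag_sq s \<Omega> u"
    unfolding gag_sq_def by (intro nn_integral_cong) (simp add: indicator_def)
  have fin: "gag_sq s \<Omega> u < \<infinity>" using u by (simp add: X0_def)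
  show "integrable MM ?f"
    unfolding integrable_iff_bounded using fm nn eq fin by simp
  show "integral\<^sup>L MM ?f = enn2real (gag_sq s \<Omega> u)"
    using integral_eq_nn_integral[OF fm] nn eq by simp
qed

lemma abs_prod_le: "\<bar>a * b\<bar> \<le> a\<^sup>2 + (b::real)\<^sup>2"
proof -
  have "0 \<le> (\<bar>a\<bar> - \<bar>b\<bar>)\<^sup>2" by simp
  then have "2 * (\<bar>a\<bar> * \<bar>b\<bar>) \<le> a\<^sup>2 + b\<^sup>2" by (simp add: power2_eq_square algebra_simps)
  moreover have "\<bar>a\<bar> * \<bar>b\<bar> \<ge> 0" by simp
  moreover have "\<bar>a * b\<bar> = \<bar>a\<bar> * \<bar>b\<bar>" by (simp add: abs_mult)
  ultimately show ?thesis by linarith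
qed

lemma prod_le_young: "t > 0 \<Longrightarrow> a * b \<le> (t * a\<^sup>2 + b\<^sup>2 / t) / (2::real)"
proof -
  assume t: "t > 0"
  have "0 \<le> (t * a - b)\<^sup>2" by simp
  then have "2 * t * (a * b) \<le> t * (t * a\<^sup>2) + b\<^sup>2" by (simp add: power2_eq_square algebra_simps)
  then have "t * (2 * (a * b)) \<le> t * (t * a\<^sup>2 + b\<^sup>2 / t)" using t by (simp add: algebra_simps)
  then have "2 * (a * b) \<le> t * a\<^sup>2 + b\<^sup>2 / t" using t by (simp add: mult_le_cancel_left_pos)
  then show ?thesis by (simp add: le_divide_eq)
qed

lemma young_div: "((t * a + b / t) / 2) / k = t / 2 * (a / k) + 1 / (2 * t) * (b / (k::real))"
  by (cases "k = 0"; cases "t = 0") (auto simp: field_simps)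

lemma fI_integrable:
  fixes u v :: "'a::euclidean_space \<Rightarrow> real"
  assumes \<Omega>: "\<Omega> \<in> sets lebesgue" and u: "X0 s \<Omega> u" and v: "X0 s \<Omega> v" and u0: "\<forall>x. x \<notin> \<Omega> \<longrightarrow> u x = 0"
  shows "integrable MM (\<lambda>z. (u (fst z) - u (snd z)) * (v (fst z) - v (snd z)) / norm (fst z - snd z) powr (real DIM('a) + 2 * s))"
proof (rule Bochner_Integration.integrable_bound)
  let ?k = "\<lambda>z::'a\<times>'a. norm (fst z - snd z) powr (real DIM('a) + 2 * s)"
  let ?g = "\<lambda>u z. indicator (D_set \<Omega>) z * ((u (fst z) - u (snd z))\<^sup>2 / ?k z)"
  show "integrable MM (\<lambda>z. ?g u z + ?g v z)"
    by (rule Bochner_Integration.integrable_add[OF gI_integrable(1)[OF \<Omega> u] gI_integrable(1)[OF \<Omega> v]])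
  have [measurable]: "D_set \<Omega> \<in> sets MM" using \<Omega> by (rule D_set_meas)
  have um: "u \<in> borel_measurable lebesgue" using u by (simp add: X0_def)
  have vm: "v \<in> borel_measurable lebesgue" using v by (simp add: X0_def)
  have [measurable]: "(\<lambda>z. u (fst z)) \<in> borel_measurable MM" "(\<lambda>z. u (snd z)) \<in> borel_measurable MM"
    "(\<lambda>z. v (fst z)) \<in> borel_measurable MM" "(\<lambda>z. v (snd z)) \<in> borel_measurable MM"
    using um vm by (auto intro: meas_fst meas_snd)
  show "(\<lambda>z. (u (fst z) - u (snd z)) * (v (fst z) - v (snd z)) / ?k z) \<in> borel_measurable MM"
    by measurable
  show "AE z in MM. norm ((u (fst z) - u (snd z)) * (v (fst z) - v (snd z)) / ?k z) \<le> norm (?g u z + ?g v z)"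
  proof (intro AE_I2)
    fix z :: "'a \<times> 'a"
    show "norm ((u (fst z) - u (snd z)) * (v (fst z) - v (snd z)) / ?k z) \<le> norm (?g u z + ?g v z)"
    proof (cases "z \<in> D_set \<Omega>")
      case True
      have k0: "?k z \<ge> 0" by simp
      have "\<bar>(u (fst z) - u (snd z)) * (v (fst z) - v (snd z))\<bar> / ?k z \<le> ((u (fst z) - u (snd z))\<^sup>2 + (v (fst z) - v (snd z))\<^sup>2) / ?k z"
        using k0 by (intro divide_right_mono abs_prod_le) auto
      moreover have "0 \<le> ((u (fst z) - u (snd z))\<^sup>2 + (v (fst z) - v (snd z))\<^sup>2) / ?k z" using k0 by simp
      ultimately show ?thesis using True k0 by (simp add: add_divide_distrib abs_divide)
    next
      case False
      then have "u (fst z) = 0" "u (snd z) = 0" using u0 by (auto simp: D_set_iff)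
      then show ?thesis by simp
    qed
  qed
qed

lemma fI_ind:
  assumes u0: "\<forall>x. x \<notin> \<Omega> \<longrightarrow> u x = 0"
  shows "(u (fst z) - u (snd z)) * c / k = indicator (D_set \<Omega>) z * ((u (fst z) - u (snd z)) * c / (k::real))"
proof (cases "z \<in> D_set \<Omega>")
  case False
  then have "u (fst z) = 0" "u (snd z) = 0" using u0 by (auto simp: D_set_iff)
  then show ?thesis by simp
qed simp

lemma fI_upper:
  fixes u v :: "'a::euclidean_space \<Rightarrow> real"
  assumes \<Omega>: "\<Omega> \<in> sets lebesgue" and u: "X0 s \<Omega> u" and v: "X0 s \<Omega> v" and u0: "\<forall>x. x \<notin> \<Omega> \<longrightarrow> u x = 0"
    and t: "t > 0"
  shows "integral\<^sup>L MM (\<lambda>z. (u (fst z) - u (snd z)) * (v (fst z) - v (snd z)) / norm (fst z - snd z) powr (real DIM('a) + 2 * s))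
     \<le> t / 2 * enn2real (gag_sq s \<Omega> u) + 1 / (2 * t) * enn2real (gag_sq s \<Omega> v)"
proof -
  let ?k = "\<lambda>z::'a\<times>'a. norm (fst z - snd z) powr (real DIM('a) + 2 * s)"
  let ?g = "\<lambda>u z. indicator (D_set \<Omega>) z * ((u (fst z) - u (snd z))\<^sup>2 / ?k z)"
  have "integral\<^sup>L MM (\<lambda>z. (u (fst z) - u (snd z)) * (v (fst z) - v (snd z)) / ?k z)
      \<le> integral\<^sup>L MM (\<lambda>z. t / 2 * ?g u z + 1 / (2 * t) * ?g v z)"
  proof (rule integral_mono)
    show "integrable MM (\<lambda>z. (u (fst z) - u (snd z)) * (v (fst z) - v (snd z)) / ?k z)"
      by (rule fI_integrable[OF \<Omega> u v u0])
    show "integrable MM (\<lambda>z. t / 2 * ?g u z + 1 / (2 * t) * ?g v z)"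
      by (rule Bochner_Integration.integrable_add[OF integrable_mult_right[OF gI_integrable(1)[OF \<Omega> u]] integrable_mult_right[OF gI_integrable(1)[OF \<Omega> v]]])
    fix z :: "'a \<times> 'a"
    show "(u (fst z) - u (snd z)) * (v (fst z) - v (snd z)) / ?k z \<le> t / 2 * ?g u z + 1 / (2 * t) * ?g v z"
    proof (cases "z \<in> D_set \<Omega>")
      case True
      have k0: "?k z \<ge> 0" by simp
      have "(u (fst z) - u (snd z)) * (v (fst z) - v (snd z)) / ?k z \<le>
          ((t * (u (fst z) - u (snd z))\<^sup>2 + (v (fst z) - v (snd z))\<^sup>2 / t) / 2) / ?k z"
        using k0 t by (intro divide_right_mono prod_le_young) auto
      also have "\<dots> = t / 2 * ((u (fst z) - u (snd z))\<^sup>2 / ?k z) + 1 / (2 * t) * ((v (fst z) - v (snd z))\<^sup>2 / ?k z)"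
        by (rule young_div)
      finally show ?thesis using True by simp
    next
      case False
      then have "u (fst z) = 0" "u (snd z) = 0" using u0 by (auto simp: D_set_iff)
      then show ?thesis using False by simp
    qed
  qed
  also have "\<dots> = t / 2 * integral\<^sup>L MM (?g u) + 1 / (2 * t) * integral\<^sup>L MM (?g v)"
    by (subst Bochner_Integration.integral_add[OF integrable_mult_right[OF gI_integrable(1)[OF \<Omega> u]] integrable_mult_right[OF gI_integrable(1)[OF \<Omega> v]]])
       (simp only: integral_mult_right_zero)
  also have "\<dots> = t / 2 * enn2real (gag_sq s \<Omega> u) + 1 / (2 * t) * enn2real (gag_sq s \<Omega> v)"
    by (simp only: gI_integrable(2)[OF \<Omega> u] gI_integrable(2)[OF \<Omega> v])
  finally show ?thesis .
qed

lemma fI_lower: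
  fixes u v h :: "'a::euclidean_space \<Rightarrow> real"
  assumes \<Omega>: "\<Omega> \<in> sets lebesgue" and u: "X0 s \<Omega> u" and v: "X0 s \<Omega> v" and h: "X0 s \<Omega> h"
    and u0: "\<forall>x. x \<notin> \<Omega> \<longrightarrow> u x = 0" and c: "c \<ge> 0"
    and pt: "AE z in MM. z \<in> D_set \<Omega> \<longrightarrow> c * (h (fst z) - h (snd z))\<^sup>2 \<le> (u (fst z) - u (snd z)) * (v (fst z) - v (snd z))"
  shows "c * enn2real (gag_sq s \<Omega> h) \<le> integral\<^sup>L MM (\<lambda>z. (u (fst z) - u (snd z)) * (v (fst z) - v (snd z)) / norm (fst z - snd z) powr (real DIM('a) + 2 * s))"
proof -
  let ?k = "\<lambda>z::'a\<times>'a. norm (fst z - snd z) powr (real DIM('a) + 2 * s)"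
  let ?g = "\<lambda>u z. indicator (D_set \<Omega>) z * ((u (fst z) - u (snd z))\<^sup>2 / ?k z)"
  have "integral\<^sup>L MM (\<lambda>z. c * ?g h z) = c * integral\<^sup>L MM (?g h)"
    by (rule integral_mult_right_zero)
  also have "\<dots> = c * enn2real (gag_sq s \<Omega> h)"
    by (subst gI_integrable(2)[OF \<Omega> h]) (rule refl)
  finally have "c * enn2real (gag_sq s \<Omega> h) = integral\<^sup>L MM (\<lambda>z. c * ?g h z)" by simp
  also have "\<dots> \<le> integral\<^sup>L MM (\<lambda>z. (u (fst z) - u (snd z)) * (v (fst z) - v (snd z)) / ?k z)"
  proof (rule integral_mono_AE)
    show "integrable MM (\<lambda>z. (u (fst z) - u (snd z)) * (v (fst z) - v (snd z)) / ?k z)"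
      by (rule fI_integrable[OF \<Omega> u v u0])
    show "integrable MM (\<lambda>z. c * ?g h z)"
      by (rule integrable_mult_right[OF gI_integrable(1)[OF \<Omega> h]])
    show "AE z in MM. c * ?g h z \<le> (u (fst z) - u (snd z)) * (v (fst z) - v (snd z)) / ?k z"
      using pt
    proof eventually_elim
      case (elim z)
      show ?case
      proof (cases "z \<in> D_set \<Omega>")
        case True
        have k0: "?k z \<ge> 0" by simp
        have "c * ((h (fst z) - h (snd z))\<^sup>2 / ?k z) = (c * (h (fst z) - h (snd z))\<^sup>2) / ?k z" by simp
        also have "\<dots> \<le> (u (fst z) - u (snd z)) * (v (fst z) - v (snd z)) / ?k z"
          using elim True k0 by (intro divide_right_mono) auto
        finally show ?thesis using True by simp
      next
        case False
        then have "u (fst z) = 0" "u (snd z) = 0" using u0 by (auto simp: D_set_iff)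
        then show ?thesis using False by simp
      qed
    qed
  qed
  finally show ?thesis .
qed

lemma ff_diff:
  fixes u1 u2 v :: "'a::euclidean_space \<Rightarrow> real"
  assumes \<Omega>: "\<Omega> \<in> sets lebesgue" and u1: "X0 s \<Omega> u1" and u2: "X0 s \<Omega> u2" and v: "X0 s \<Omega> v"
    and z1: "\<forall>x. x \<notin> \<Omega> \<longrightarrow> u1 x = 0" and z2: "\<forall>x. x \<notin> \<Omega> \<longrightarrow> u2 x = 0"
  shows "frac_form s u1 v - frac_form s u2 v = CNs DIM('a) s / 2 *
     integral\<^sup>L MM (\<lambda>z. ((u1 (fst z) - u2 (fst z)) - (u1 (snd z) - u2 (snd z))) * (v (fst z) - v (snd z)) / norm (fst z - snd z) powr (real DIM('a) + 2 * s))"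
proof -
  let ?k = "\<lambda>z::'a\<times>'a. norm (fst z - snd z) powr (real DIM('a) + 2 * s)"
  have i1: "integrable MM (\<lambda>z. (u1 (fst z) - u1 (snd z)) * (v (fst z) - v (snd z)) / ?k z)"
    by (rule fI_integrable[OF \<Omega> u1 v z1])
  have i2: "integrable MM (\<lambda>z. (u2 (fst z) - u2 (snd z)) * (v (fst z) - v (snd z)) / ?k z)"
    by (rule fI_integrable[OF \<Omega> u2 v z2])
  have "frac_form s u1 v - frac_form s u2 v = CNs DIM('a) s / 2 * (integral\<^sup>L MM (\<lambda>z. (u1 (fst z) - u1 (snd z)) * (v (fst z) - v (snd z)) / ?k z)
       - integral\<^sup>L MM (\<lambda>z. (u2 (fst z) - u2 (snd z)) * (v (fst z) - v (snd z)) / ?k z))"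
    by (simp add: frac_form_def algebra_simps)
  also have "\<dots> = CNs DIM('a) s / 2 * integral\<^sup>L MM (\<lambda>z. (u1 (fst z) - u1 (snd z)) * (v (fst z) - v (snd z)) / ?k z
       - (u2 (fst z) - u2 (snd z)) * (v (fst z) - v (snd z)) / ?k z)"
    using i1 i2 by simp
  also have "\<dots> = CNs DIM('a) s / 2 *
     integral\<^sup>L MM (\<lambda>z. ((u1 (fst z) - u2 (fst z)) - (u1 (snd z) - u2 (snd z))) * (v (fst z) - v (snd z)) / ?k z)"
    by (simp add: diff_divide_distrib[symmetric] algebra_simps)
  finally show ?thesis .
qed

lemma CNs_pos: "0 < s \<Longrightarrow> s < 1 \<Longrightarrow> CNs N s > 0"
  unfolding CNs_def
  by (intro divide_pos_pos mult_pos_pos Gamma_real_pos) auto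

lemma trunc_nonneg_eq: "0 \<le> k \<Longrightarrow> 0 \<le> t \<Longrightarrow> trunc k t = min k t"
  by (simp add: trunc_def)
lemma trunc_0: "0 \<le> k \<Longrightarrow> trunc k 0 = 0"
  by (simp add: trunc_def)
lemma trunc_mono: "a \<le> b \<Longrightarrow> trunc k a \<le> trunc k b"
  by (simp add: trunc_def)
lemma trunc_lip: "\<bar>trunc k a - trunc k b\<bar> \<le> \<bar>a - b\<bar>"
  by (simp add: trunc_def)
lemma trunc_key: "(trunc k a - trunc k b)\<^sup>2 \<le> (a - b) * (trunc k a - trunc k b)"
  unfolding power2_eq_square trunc_def
  by (cases "a \<le> b") (auto simp: max_def min_def mult_le_cancel_right mult_le_0_iff intro: mult_right_mono mult_left_mono)
lemma trunc_bounds: "0 \<le> k \<Longrightarrow> 0 \<le> t \<Longrightarrow> 0 \<le> trunc k t \<and> trunc k t \<le> k \<and> trunc k t \<le> t"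
  by (simp add: trunc_def)

lemma sq_diff_le: "(x - y)\<^sup>2 \<le> 2 * x\<^sup>2 + 2 * (y::real)\<^sup>2"
proof -
  have "2 * x\<^sup>2 + 2 * y\<^sup>2 - (x - y)\<^sup>2 = (x + y)\<^sup>2" by (simp add: power2_eq_square algebra_simps)
  then show ?thesis using zero_le_power2[of "x + y"] by linarith
qed

lemma posdiff_sq: "(max 0 (a1 - a2) - max 0 (b1 - b2))\<^sup>2 \<le> 2 * (a1 - b1)\<^sup>2 + 2 * ((a2::real) - b2)\<^sup>2"
proof -
  have "\<bar>max 0 (a1 - a2) - max 0 (b1 - b2)\<bar> \<le> \<bar>(a1 - b1) - (a2 - b2)\<bar>" by auto
  then have "(max 0 (a1 - a2) - max 0 (b1 - b2))\<^sup>2 \<le> ((a1 - b1) - (a2 - b2))\<^sup>2"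
    by (metis abs_ge_zero power2_abs power_mono)
  also have "\<dots> \<le> 2 * (a1 - b1)\<^sup>2 + 2 * (a2 - b2)\<^sup>2"
    by (rule sq_diff_le)
  finally show ?thesis .
qed

lemma posdiff_mono: "0 \<le> (x - y) * (max 0 x - max 0 (y::real))"
  by (cases "x \<le> y") (auto simp: max_def mult_le_0_iff)

definition Fn :: "('a \<Rightarrow> real) \<Rightarrow> real \<Rightarrow> real \<Rightarrow> ('a \<Rightarrow> real) \<Rightarrow> ('a \<Rightarrow> real) \<Rightarrow> nat \<Rightarrow> 'a \<Rightarrow> real \<Rightarrow> real" where
  "Fn K q \<gamma> f \<mu> n = (\<lambda>x t. K x * t powr (- q) + trunc (real n) (f x) / (t + 1 / real n) powr \<gamma> + trunc (real n) (\<mu> x))"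

lemma F_strict:
  assumes b: "0 < b" "b < a" and K: "K > 0" and q: "q > 0" and \<gamma>: "\<gamma> > 0" and f: "f \<ge> 0" and \<mu>: "\<mu> \<ge> 0" and n: "n \<ge> 1"
  shows "K * a powr (- q) + trunc (real (1::nat)) f / (a + 1 / real (1::nat)) powr \<gamma> + trunc (real (1::nat)) \<mu>
       < K * b powr (- q) + trunc (real n) f / (b + 1 / real n) powr \<gamma> + trunc (real n) \<mu>"
proof -
  have "a powr (- q) < b powr (- q)" using b q by (intro powr_less_mono2_neg) auto
  then have 1: "K * a powr (- q) < K * b powr (- q)" using K by simp
  have nn: "real n \<ge> 1" using n by simp
  have t1: "trunc 1 f \<le> trunc (real n) f" using f nn by (simp add: trunc_def)
  have t1': "trunc 1 \<mu> \<le> trunc (real n) \<mu>" using \<mu> nn by (simp add: trunc_def)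
  have tn0: "0 \<le> trunc (real n) f" using f nn by (simp add: trunc_def)
  have "1 / real n \<le> 1" using nn by simp
  then have le: "b + 1 / real n \<le> a + 1" using b by linarith
  have pos: "0 < b + 1 / real n" using b nn by (simp add: add_pos_pos)
  have pw: "(b + 1 / real n) powr \<gamma> \<le> (a + 1) powr \<gamma>" using le pos \<gamma> by (intro powr_mono2) auto
  have pwpos: "0 < (b + 1 / real n) powr \<gamma>" using pos by simp
  have "trunc 1 f / (a + 1) powr \<gamma> \<le> trunc (real n) f / (a + 1) powr \<gamma>"
    using t1 b by (intro divide_right_mono) auto
  also have "\<dots> \<le> trunc (real n) f / (b + 1 / real n) powr \<gamma>"
    using tn0 pw pwpos b by (intro divide_left_mono) (auto intro!: mult_pos_pos)
  finally have 2: "trunc 1 f / (a + 1) powr \<gamma> \<le> trunc (real n) f / (b + 1 / real n) powr \<gamma>" .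
  show ?thesis using 1 2 t1' by simp
qed

lemma open_leb: "open \<Omega> \<Longrightarrow> \<Omega> \<in> sets lebesgue"
  by (metis borel_open sets_completionI_sets sets_lborel)

lemma comparison:
  fixes w :: "nat \<Rightarrow> 'a::euclidean_space \<Rightarrow> real" and \<Omega> :: "'a set"
  assumes \<Omega>: "open \<Omega>" and n: "n \<ge> 1" and s: "0 < s" "s < 1"
    and sol1: "weak_energy_sol s \<Omega> (Fn K q \<gamma> f \<mu> 1) (w 1)"
    and soln: "weak_energy_sol s \<Omega> (Fn K q \<gamma> f \<mu> n) (w n)"
    and pos1: "AE x in lebesgue. x \<in> \<Omega> \<longrightarrow> w 1 x > 0"
    and posn: "AE x in lebesgue. x \<in> \<Omega> \<longrightarrow> w n x > 0"
    and Kpos: "\<forall>x\<in>\<Omega>. K x > 0" and q: "q > 0" and \<gamma>: "\<gamma> > 0"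
    and f: "AE x in lebesgue. x \<in> \<Omega> \<longrightarrow> f x \<ge> 0" and \<mu>: "AE x in lebesgue. x \<in> \<Omega> \<longrightarrow> \<mu> x \<ge> 0"
  shows "AE x in lebesgue. x \<in> \<Omega> \<longrightarrow> w 1 x \<le> w n x"
proof -
  let ?k = "\<lambda>z::'a\<times>'a. norm (fst z - snd z) powr (real DIM('a) + 2 * s)"
  define u1 where "u1 = w 1"
  define un where "un = w n"
  have \<Omega>m: "\<Omega> \<in> sets lebesgue" using \<Omega> by (rule open_leb)
  have X1: "X0 s \<Omega> u1" and z1: "\<forall>x. x \<notin> \<Omega> \<longrightarrow> u1 x = 0"
    and e1: "\<And>\<phi>. X0 s \<Omega> \<phi> \<Longrightarrow> set_integrable lebesgue \<Omega> (\<lambda>x. Fn K q \<gamma> f \<mu> 1 x (u1 x) * \<phi> x) \<and>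
          frac_form s u1 \<phi> = (\<integral>x\<in>\<Omega>. Fn K q \<gamma> f \<mu> 1 x (u1 x) * \<phi> x \<partial>lebesgue)"
    using sol1 unfolding u1_def weak_energy_sol_def by blast+
  have Xn: "X0 s \<Omega> un" and zn: "\<forall>x. x \<notin> \<Omega> \<longrightarrow> un x = 0"
    and en: "\<And>\<phi>. X0 s \<Omega> \<phi> \<Longrightarrow> set_integrable lebesgue \<Omega> (\<lambda>x. Fn K q \<gamma> f \<mu> n x (un x) * \<phi> x) \<and>
          frac_form s un \<phi> = (\<integral>x\<in>\<Omega>. Fn K q \<gamma> f \<mu> n x (un x) * \<phi> x \<partial>lebesgue)"
    using soln unfolding un_def weak_energy_sol_def by blast+
  have [measurable]: "u1 \<in> borel_measurable lebesgue" "un \<in> borel_measurable lebesgue"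
    using X1 Xn by (auto simp: X0_def)
  define \<phi> where "\<phi> x = max 0 (u1 x - un x)" for x
  have \<phi>m: "\<phi> \<in> borel_measurable lebesgue" unfolding \<phi>_def by measurable
  have \<phi>0: "\<forall>x. x \<notin> \<Omega> \<longrightarrow> \<phi> x = 0" using z1 zn by (simp add: \<phi>_def)
  have "gag_sq s \<Omega> \<phi> \<le> ennreal 2 * gag_sq s \<Omega> u1 + ennreal 2 * gag_sq s \<Omega> un"
    by (rule gag_le2[OF \<Omega>m _ \<phi>m]) (auto simp: \<phi>_def posdiff_sq)
  also have "\<dots> < \<infinity>" using X1 Xn by (simp add: X0_def ennreal_mult_less_top)
  finally have X\<phi>: "X0 s \<Omega> \<phi>" using \<phi>m \<phi>0 by (simp add: X0_def)
  have "frac_form s u1 \<phi> - frac_form s un \<phi> = CNs DIM('a) s / 2 *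
     integral\<^sup>L MM (\<lambda>z. ((u1 (fst z) - un (fst z)) - (u1 (snd z) - un (snd z))) * (\<phi> (fst z) - \<phi> (snd z)) / ?k z)"
    by (rule ff_diff[OF \<Omega>m X1 Xn X\<phi> z1 zn])
  also have "\<dots> \<ge> 0"
    using CNs_pos[OF s, of "DIM('a)"]
    by (intro mult_nonneg_nonneg integral_nonneg divide_nonneg_nonneg) (auto simp: \<phi>_def posdiff_mono)
  finally have ge: "frac_form s un \<phi> \<le> frac_form s u1 \<phi>" by simp
  define H where "H x = indicator \<Omega> x * ((Fn K q \<gamma> f \<mu> n x (un x) - Fn K q \<gamma> f \<mu> 1 x (u1 x)) * \<phi> x)" for x
  have i1: "integrable lebesgue (\<lambda>x. indicator \<Omega> x * (Fn K q \<gamma> f \<mu> 1 x (u1 x) * \<phi> x))"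
    using e1[OF X\<phi>] by (simp add: set_integrable_def)
  have i2: "integrable lebesgue (\<lambda>x. indicator \<Omega> x * (Fn K q \<gamma> f \<mu> n x (un x) * \<phi> x))"
    using en[OF X\<phi>] by (simp add: set_integrable_def)
  have Heq: "H = (\<lambda>x. indicator \<Omega> x * (Fn K q \<gamma> f \<mu> n x (un x) * \<phi> x) - indicator \<Omega> x * (Fn K q \<gamma> f \<mu> 1 x (u1 x) * \<phi> x))"
    by (auto simp: H_def fun_eq_iff algebra_simps)
  have Hi: "integrable lebesgue H" unfolding Heq using i1 i2 by simp
  have "integral\<^sup>L lebesgue H = frac_form s un \<phi> - frac_form s u1 \<phi>"
    unfolding Heq using i1 i2 e1[OF X\<phi>] en[OF X\<phi>] by (simp add: set_lebesgue_integral_def)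
  with ge have Hle: "integral\<^sup>L lebesgue H \<le> 0" by simp
  have Hnn: "AE x in lebesgue. 0 \<le> H x"
    using pos1 posn f \<mu>
  proof eventually_elim
    case (elim x)
    show ?case
    proof (cases "x \<in> \<Omega> \<and> u1 x > un x")
      case True
      have "Fn K q \<gamma> f \<mu> 1 x (u1 x) < Fn K q \<gamma> f \<mu> n x (un x)"
        unfolding Fn_def using True elim Kpos q \<gamma> n unfolding u1_def un_def
        by (intro F_strict) auto
      then show ?thesis using True by (simp add: H_def \<phi>_def)
    next
      case False
      then show ?thesis by (auto simp: H_def \<phi>_def)
    qed
  qed
  have "integral\<^sup>L lebesgue H = 0" using Hle integral_nonneg_AE[OF Hnn] by simp
  then have H0: "AE x in lebesgue. H x = 0" using integral_nonneg_eq_0_iff_AE[OF Hi Hnn] by simp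
  show ?thesis
    using H0 pos1 posn f \<mu>
  proof eventually_elim
    case (elim x)
    show ?case
    proof (rule impI, rule ccontr)
      assume x: "x \<in> \<Omega>" and "\<not> w 1 x \<le> w n x"
      then have True: "u1 x > un x" by (simp add: u1_def un_def)
      have "Fn K q \<gamma> f \<mu> 1 x (u1 x) < Fn K q \<gamma> f \<mu> n x (un x)"
        unfolding Fn_def using True x elim Kpos q \<gamma> n unfolding u1_def un_def
        by (intro F_strict) auto
      then have "H x > 0" using True x by (simp add: H_def \<phi>_def)
      then show False using elim by simp
    qed
  qed
qed

lemma main_est:
  fixes w :: "nat \<Rightarrow> 'a::euclidean_space \<Rightarrow> real" and \<Omega> :: "'a set"
  assumes \<Omega>: "open \<Omega>" and s: "0 < s" "s < 1"
    and sol1: "weak_energy_sol s \<Omega> (Fn K q \<gamma> f \<mu> 1) (w 1)"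
    and soln: "weak_energy_sol s \<Omega> (Fn K q \<gamma> f \<mu> n) (w n)"
    and XT: "X0 s \<Omega> T" and Xh: "X0 s \<Omega> h" and c: "c \<ge> 0" and t: "t > 0"
    and pair: "AE z in MM. z \<in> D_set \<Omega> \<longrightarrow> c * (h (fst z) - h (snd z))\<^sup>2 \<le> (w n (fst z) - w n (snd z)) * (T (fst z) - T (snd z))"
    and ptF: "AE x in lebesgue. x \<in> \<Omega> \<longrightarrow> Fn K q \<gamma> f \<mu> n x (w n x) * T x \<le> Fn K q \<gamma> f \<mu> 1 x (w 1 x) * T x + A * f x + B * \<mu> x"
    and fi: "set_integrable lebesgue \<Omega> f" and \<mu>i: "set_integrable lebesgue \<Omega> \<mu>"
  shows "CNs DIM('a) s / 2 * (c * enn2real (gag_sq s \<Omega> h)) \<le>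
     CNs DIM('a) s / 2 * (t / 2 * enn2real (gag_sq s \<Omega> (w 1)) + 1 / (2 * t) * enn2real (gag_sq s \<Omega> T))
     + A * (\<integral>x\<in>\<Omega>. f x \<partial>lebesgue) + B * (\<integral>x\<in>\<Omega>. \<mu> x \<partial>lebesgue)"
proof -
  let ?k = "\<lambda>z::'a\<times>'a. norm (fst z - snd z) powr (real DIM('a) + 2 * s)"
  have \<Omega>m: "\<Omega> \<in> sets lebesgue" using \<Omega> by (rule open_leb)
  have X1: "X0 s \<Omega> (w 1)" and z1: "\<forall>x. x \<notin> \<Omega> \<longrightarrow> w 1 x = 0"
    and e1: "\<And>\<phi>. X0 s \<Omega> \<phi> \<Longrightarrow> set_integrable lebesgue \<Omega> (\<lambda>x. Fn K q \<gamma> f \<mu> 1 x (w 1 x) * \<phi> x) \<and>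
          frac_form s (w 1) \<phi> = (\<integral>x\<in>\<Omega>. Fn K q \<gamma> f \<mu> 1 x (w 1 x) * \<phi> x \<partial>lebesgue)"
    using sol1 unfolding weak_energy_sol_def by blast+
  have Xn: "X0 s \<Omega> (w n)" and zn: "\<forall>x. x \<notin> \<Omega> \<longrightarrow> w n x = 0"
    and en: "\<And>\<phi>. X0 s \<Omega> \<phi> \<Longrightarrow> set_integrable lebesgue \<Omega> (\<lambda>x. Fn K q \<gamma> f \<mu> n x (w n x) * \<phi> x) \<and>
          frac_form s (w n) \<phi> = (\<integral>x\<in>\<Omega>. Fn K q \<gamma> f \<mu> n x (w n x) * \<phi> x \<partial>lebesgue)"
    using soln unfolding weak_energy_sol_def by blast+
  have C: "CNs DIM('a) s / 2 > 0" using CNs_pos[OF s] by simp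
  have "c * enn2real (gag_sq s \<Omega> h) \<le> integral\<^sup>L MM (\<lambda>z. (w n (fst z) - w n (snd z)) * (T (fst z) - T (snd z)) / ?k z)"
    by (rule fI_lower[OF \<Omega>m Xn XT Xh zn c pair])
  then have "CNs DIM('a) s / 2 * (c * enn2real (gag_sq s \<Omega> h)) \<le> frac_form s (w n) T"
    unfolding frac_form_def using C by (intro mult_left_mono) auto
  also have "\<dots> = (\<integral>x\<in>\<Omega>. Fn K q \<gamma> f \<mu> n x (w n x) * T x \<partial>lebesgue)" using en[OF XT] by simp
  also have "\<dots> \<le> (\<integral>x\<in>\<Omega>. (Fn K q \<gamma> f \<mu> 1 x (w 1 x) * T x + A * f x + B * \<mu> x) \<partial>lebesgue)"
    unfolding set_lebesgue_integral_def
  proof (rule integral_mono_AE)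
    show "integrable lebesgue (\<lambda>x. indicator \<Omega> x *\<^sub>R (Fn K q \<gamma> f \<mu> n x (w n x) * T x))"
      using en[OF XT] by (simp add: set_integrable_def)
    have a: "integrable lebesgue (\<lambda>x. indicator \<Omega> x *\<^sub>R (Fn K q \<gamma> f \<mu> 1 x (w 1 x) * T x))"
      using e1[OF XT] by (simp add: set_integrable_def)
    have b: "integrable lebesgue (\<lambda>x. indicator \<Omega> x *\<^sub>R f x)" using fi by (simp add: set_integrable_def)
    have c: "integrable lebesgue (\<lambda>x. indicator \<Omega> x *\<^sub>R \<mu> x)" using \<mu>i by (simp add: set_integrable_def)
    have "integrable lebesgue (\<lambda>x. indicator \<Omega> x *\<^sub>R (Fn K q \<gamma> f \<mu> 1 x (w 1 x) * T x) + A * (indicator \<Omega> x *\<^sub>R f x) + B * (indicator \<Omega> x *\<^sub>R \<mu> x))"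
      using a b c by simp
    then show "integrable lebesgue (\<lambda>x. indicator \<Omega> x *\<^sub>R (Fn K q \<gamma> f \<mu> 1 x (w 1 x) * T x + A * f x + B * \<mu> x))"
      by (simp add: algebra_simps)
    show "AE x in lebesgue. indicator \<Omega> x *\<^sub>R (Fn K q \<gamma> f \<mu> n x (w n x) * T x) \<le> indicator \<Omega> x *\<^sub>R (Fn K q \<gamma> f \<mu> 1 x (w 1 x) * T x + A * f x + B * \<mu> x)"
      using ptF by eventually_elim (auto simp: indicator_def)
  qed
  also have "\<dots> = (\<integral>x\<in>\<Omega>. Fn K q \<gamma> f \<mu> 1 x (w 1 x) * T x \<partial>lebesgue) + A * (\<integral>x\<in>\<Omega>. f x \<partial>lebesgue) + B * (\<integral>x\<in>\<Omega>. \<mu> x \<partial>lebesgue)"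
  proof -
    have a: "integrable lebesgue (\<lambda>x. indicator \<Omega> x *\<^sub>R (Fn K q \<gamma> f \<mu> 1 x (w 1 x) * T x))"
      using e1[OF XT] by (simp add: set_integrable_def)
    have b: "integrable lebesgue (\<lambda>x. indicator \<Omega> x *\<^sub>R f x)" using fi by (simp add: set_integrable_def)
    have c: "integrable lebesgue (\<lambda>x. indicator \<Omega> x *\<^sub>R \<mu> x)" using \<mu>i by (simp add: set_integrable_def)
    have "(\<lambda>x. indicator \<Omega> x *\<^sub>R (Fn K q \<gamma> f \<mu> 1 x (w 1 x) * T x + A * f x + B * \<mu> x)) =
       (\<lambda>x. indicator \<Omega> x *\<^sub>R (Fn K q \<gamma> f \<mu> 1 x (w 1 x) * T x) + A * (indicator \<Omega> x *\<^sub>R f x) + B * (indicator \<Omega> x *\<^sub>R \<mu> x))"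
      by (simp add: fun_eq_iff algebra_simps)
    then show ?thesis unfolding set_lebesgue_integral_def using a b c by simp
  qed
  also have "(\<integral>x\<in>\<Omega>. Fn K q \<gamma> f \<mu> 1 x (w 1 x) * T x \<partial>lebesgue) = frac_form s (w 1) T"
    using e1[OF XT] by simp
  also have "frac_form s (w 1) T \<le> CNs DIM('a) s / 2 * (t / 2 * enn2real (gag_sq s \<Omega> (w 1)) + 1 / (2 * t) * enn2real (gag_sq s \<Omega> T))"
    unfolding frac_form_def using C fI_upper[OF \<Omega>m X1 XT z1 t] by (intro mult_left_mono) auto
  finally show ?thesis by simp
qed

lemma powr_split1: "0 \<le> x \<Longrightarrow> x powr e = x powr (e - 1) * (x::real)"
proof -
  assume x: "0 \<le> x"
  have "x powr e = x powr ((e - 1) + 1)" by simp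
  also have "\<dots> = x powr (e - 1) * x powr 1" by (rule powr_add)
  also have "\<dots> = x powr (e - 1) * x" using x by (cases "x = 0") auto
  finally show ?thesis .
qed

lemma pow_mvt:
  fixes x y e :: real
  assumes y: "0 \<le> y" "y \<le> x" and e: "e \<ge> 1"
  shows "x powr e - y powr e \<le> e * x powr (e - 1) * (x - y)"
proof (cases "y = 0")
  case True
  have "x powr e = x powr (e - 1) * x" using y by (intro powr_split1) auto
  also have "\<dots> \<le> e * (x powr (e - 1) * x)"
  proof -
    have "0 \<le> x powr (e - 1) * x" using y by simp
    from mult_right_mono[OF e this] show ?thesis by simp
  qed
  finally show ?thesis using True by (simp add: algebra_simps)
next
  case False
  show ?thesis
  proof (cases "y = x")
    case False
    then have yx: "y < x" using y by simp
    have "\<exists>z. y < z \<and> z < x \<and> (x powr e - y powr e = (x - y) * (e * z powr (e - 1)))"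
      using \<open>y \<noteq> 0\<close> y
      by (intro MVT2[OF yx] has_real_derivative_powr) auto
    then obtain z where z: "y < z" "z < x" "x powr e - y powr e = (x - y) * (e * z powr (e - 1))" by blast
    have "z powr (e - 1) \<le> x powr (e - 1)" using z y e by (intro powr_mono2) auto
    then have "(x - y) * (e * z powr (e - 1)) \<le> (x - y) * (e * x powr (e - 1))"
      using yx e by (intro mult_left_mono) auto
    then show ?thesis using z by (simp add: algebra_simps)
  qed simp
qed

lemma pow_lip:
  fixes a b M e :: real
  assumes "0 \<le> a" "0 \<le> b" "a \<le> M" "b \<le> M" "e \<ge> 1"
  shows "\<bar>a powr e - b powr e\<bar> \<le> e * M powr (e - 1) * \<bar>a - b\<bar>"
proof -
  have gen: "x powr e - y powr e \<le> e * M powr (e - 1) * (x - y)" if "0 \<le> y" "y \<le> x" "x \<le> M" for x y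
  proof -
    have "x powr e - y powr e \<le> e * x powr (e - 1) * (x - y)" using that assms by (intro pow_mvt) auto
    also have "\<dots> \<le> e * M powr (e - 1) * (x - y)"
      using that assms by (intro mult_right_mono mult_left_mono powr_mono2) auto
    finally show ?thesis .
  qed
  show ?thesis
  proof (cases "b \<le> a")
    case True
    have "b powr e \<le> a powr e" using True assms by (intro powr_mono2) auto
    then show ?thesis using gen[of b a] True assms by simp
  next
    case False
    have "a powr e \<le> b powr e" using False assms by (intro powr_mono2) auto
    then show ?thesis using gen[of a b] False assms by simp
  qed
qed

lemma pow_key_ord:
  fixes X Y g :: real
  assumes Y: "0 \<le> Y" "Y \<le> X" and g: "g \<ge> 1"
  shows "(X powr ((g + 1) / 2) - Y powr ((g + 1) / 2))\<^sup>2 \<le> (g + 1) / 2 * ((X - Y) * (X powr g - Y powr g))"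
proof -
  define p where "p = (g + 1) / 2"
  have p1: "p \<ge> 1" using g by (simp add: p_def)
  have gp: "g = (p - 1) + p" by (simp add: p_def field_simps)
  define A where "A = X powr p - Y powr p"
  have A0: "A \<ge> 0" unfolding A_def using Y p1 by (simp add: powr_mono2)
  have A1: "A \<le> p * X powr (p - 1) * (X - Y)" unfolding A_def using Y p1 by (intro pow_mvt) auto
  have A2: "X powr (p - 1) * A \<le> X powr g - Y powr g"
  proof -
    have "X powr g = X powr (p - 1) * X powr p" unfolding gp by (rule powr_add)
    moreover have "Y powr g = Y powr (p - 1) * Y powr p" unfolding gp by (rule powr_add)
    moreover have "Y powr (p - 1) * Y powr p \<le> X powr (p - 1) * Y powr p"
      using Y p1 by (intro mult_right_mono powr_mono2) auto
    ultimately show ?thesis by (simp add: A_def algebra_simps)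
  qed
  have "A\<^sup>2 = A * A" by (simp add: power2_eq_square)
  also have "\<dots> \<le> (p * X powr (p - 1) * (X - Y)) * A" using A0 A1 by (intro mult_right_mono) auto
  also have "\<dots> = p * (X - Y) * (X powr (p - 1) * A)" by (simp add: algebra_simps)
  also have "\<dots> \<le> p * (X - Y) * (X powr g - Y powr g)"
    using A2 Y p1 by (intro mult_left_mono) auto
  finally have "A\<^sup>2 \<le> p * ((X - Y) * (X powr g - Y powr g))" by (simp add: mult.assoc)
  then show ?thesis unfolding A_def p_def .
qed

lemma pow_key:
  fixes X Y g :: real
  assumes "0 \<le> X" "0 \<le> Y" "g \<ge> 1"
  shows "(X powr ((g + 1) / 2) - Y powr ((g + 1) / 2))\<^sup>2 \<le> (g + 1) / 2 * ((X - Y) * (X powr g - Y powr g))"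
proof (cases "Y \<le> X")
  case True then show ?thesis using assms by (intro pow_key_ord) auto
next
  case False
  then have "(Y powr ((g + 1) / 2) - X powr ((g + 1) / 2))\<^sup>2 \<le> (g + 1) / 2 * ((Y - X) * (Y powr g - X powr g))"
    using assms by (intro pow_key_ord) auto
  moreover have "(Y - X) * (Y powr g - X powr g) = (X - Y) * (X powr g - Y powr g)" by (simp add: algebra_simps)
  moreover have "(Y powr ((g + 1) / 2) - X powr ((g + 1) / 2))\<^sup>2 = (X powr ((g + 1) / 2) - Y powr ((g + 1) / 2))\<^sup>2"
    by (rule power2_commute)
  ultimately show ?thesis by simp
qed

lemma trunc_pow_mono:
  fixes a b k g :: real
  assumes "0 \<le> a" "0 \<le> b" "0 \<le> k" "g > 0"
  shows "(trunc k a - trunc k b) * (trunc k a powr g - trunc k b powr g) \<le> (a - b) * (trunc k a powr g - trunc k b powr g)"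
proof (cases "b \<le> a")
  case True
  have tb: "0 \<le> trunc k b" "trunc k b \<le> trunc k a" using assms True by (auto simp: trunc_def)
  have "trunc k b powr g \<le> trunc k a powr g" using tb assms by (intro powr_mono2) auto
  moreover have "trunc k a - trunc k b \<le> a - b" using trunc_lip[of k a b] tb True by simp
  ultimately show ?thesis by (intro mult_right_mono) auto
next
  case False
  have tb: "0 \<le> trunc k a" "trunc k a \<le> trunc k b" using assms False by (auto simp: trunc_def)
  have "trunc k a powr g \<le> trunc k b powr g" using tb assms by (intro powr_mono2) auto
  moreover have "trunc k b - trunc k a \<le> b - a" using trunc_lip[of k b a] tb False by simp
  ultimately have "(trunc k b - trunc k a) * (trunc k b powr g - trunc k a powr g) \<le> (b - a) * (trunc k b powr g - trunc k a powr g)"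
    by (intro mult_right_mono) auto
  then show ?thesis by (simp add: algebra_simps)
qed

lemma conc_lemma:
  fixes a b c p :: real
  assumes "0 < c" "c \<le> a" "0 \<le> b" "p \<ge> 1"
  shows "c powr (p - 1) * \<bar>a - b\<bar> \<le> \<bar>a powr p - b powr p\<bar>"
proof -
  have ca: "c powr (p - 1) \<le> a powr (p - 1)" using assms by (intro powr_mono2) auto
  have "a powr (p - 1) * \<bar>a - b\<bar> \<le> \<bar>a powr p - b powr p\<bar>"
  proof (cases "a \<le> b")
    case True
    have "b powr p = b powr (p - 1) * b" using assms by (intro powr_split1) auto
    moreover have "a powr p = a powr (p - 1) * a" using assms by (intro powr_split1) auto
    moreover have "a powr (p - 1) * b \<le> b powr (p - 1) * b" using assms True by (intro mult_right_mono powr_mono2) auto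
    ultimately have "a powr (p - 1) * (b - a) \<le> b powr p - a powr p" by (simp add: algebra_simps)
    then show ?thesis using True by simp
  next
    case False
    have "b powr p = b powr (p - 1) * b" using assms by (intro powr_split1) auto
    moreover have "a powr p = a powr (p - 1) * a" using assms by (intro powr_split1) auto
    moreover have "b powr (p - 1) * b \<le> a powr (p - 1) * b" using assms False by (intro mult_right_mono powr_mono2) auto
    ultimately have "a powr (p - 1) * (a - b) \<le> a powr p - b powr p" by (simp add: algebra_simps)
    then show ?thesis using False by simp
  qed
  moreover have "c powr (p - 1) * \<bar>a - b\<bar> \<le> a powr (p - 1) * \<bar>a - b\<bar>" using ca by (intro mult_right_mono) auto
  ultimately show ?thesis by linarith
qed

lemma bdist_pos:
  fixes \<Omega> :: "'a::euclidean_space set"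
  assumes "open \<Omega>" "bounded \<Omega>" "\<Omega> \<noteq> {}" "x \<in> \<Omega>"
  shows "bdist \<Omega> x > 0"
proof -
  have "\<Omega> \<noteq> UNIV" using assms(2) by auto
  then have "frontier \<Omega> \<noteq> {}" using assms(3) frontier_eq_empty by blast
  moreover have "x \<notin> frontier \<Omega>" using assms(1,4) by (simp add: frontier_def interior_open)
  ultimately show ?thesis unfolding bdist_def by (intro infdist_pos_not_in_closed) auto
qed

lemma ptF_i:
  assumes b: "0 < b" "b \<le> a" and K: "K x \<ge> 0" and q: "q > 0" and \<gamma>: "0 < \<gamma>" "\<gamma> \<le> 1" and k: "k > 0"
    and f: "f x \<ge> 0" and \<mu>: "\<mu> x \<ge> 0" and n: "n \<ge> 1"
  shows "Fn K q \<gamma> f \<mu> n x a * trunc k a \<le> Fn K q \<gamma> f \<mu> 1 x b * trunc k a + k powr (1 - \<gamma>) * f x + k * \<mu> x"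
proof -
  define X where "X = trunc k a"
  have X: "0 < X" "X \<le> k" "X \<le> a" using b k by (auto simp: X_def trunc_def)
  have nn: "real n \<ge> 1" using n by simp
  have tn: "0 \<le> trunc (real n) (f x)" "trunc (real n) (f x) \<le> f x" using f nn by (auto simp: trunc_def)
  have tm: "0 \<le> trunc (real n) (\<mu> x)" "trunc (real n) (\<mu> x) \<le> \<mu> x" using \<mu> nn by (auto simp: trunc_def)
  have t1: "0 \<le> trunc 1 (f x)" "0 \<le> trunc 1 (\<mu> x)" using f \<mu> by (auto simp: trunc_def)
  have 1: "K x * a powr (- q) * X \<le> K x * b powr (- q) * X"
    using b q K X by (intro mult_right_mono mult_left_mono powr_mono2') auto
  have apos: "0 < a + 1 / real n" using b nn by (simp add: add_pos_nonneg)
  have "X \<le> a + 1 / real n" using X nn by (simp add: add_increasing2)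
  then have "X powr \<gamma> \<le> (a + 1 / real n) powr \<gamma>" using X \<gamma> by (intro powr_mono2) auto
  then have "X / (a + 1 / real n) powr \<gamma> \<le> X / X powr \<gamma>" using X apos by (intro divide_left_mono) (auto intro!: mult_pos_pos)
  also have "\<dots> = X powr (1 - \<gamma>)" using X by (simp add: powr_diff)
  also have "\<dots> \<le> k powr (1 - \<gamma>)" using X \<gamma> by (intro powr_mono2) auto
  finally have r: "X / (a + 1 / real n) powr \<gamma> \<le> k powr (1 - \<gamma>)" .
  have 2: "trunc (real n) (f x) / (a + 1 / real n) powr \<gamma> * X \<le> k powr (1 - \<gamma>) * f x"
  proof -
    have "trunc (real n) (f x) / (a + 1 / real n) powr \<gamma> * X = trunc (real n) (f x) * (X / (a + 1 / real n) powr \<gamma>)" by simp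
    also have "\<dots> \<le> f x * k powr (1 - \<gamma>)" using tn r X apos by (intro mult_mono) auto
    finally show ?thesis by (simp add: mult.commute)
  qed
  have 3: "trunc (real n) (\<mu> x) * X \<le> k * \<mu> x" using tm X by (simp add: mult.commute mult_mono)
  have 4: "0 \<le> trunc 1 (f x) / (b + 1) powr \<gamma> * X + trunc 1 (\<mu> x) * X" using t1 X b by simp
  show ?thesis using 1 2 3 4 unfolding Fn_def X_def[symmetric] by (simp add: algebra_simps)
qed

lemma ptF_ii:
  assumes b: "0 < b" "b \<le> a" and K: "K x \<ge> 0" and q: "q > 0" and \<gamma>: "0 < \<gamma>" and k: "k > 0"
    and f: "f x \<ge> 0" and \<mu>: "\<mu> x \<ge> 0" and n: "n \<ge> 1"
  shows "Fn K q \<gamma> f \<mu> n x a * trunc k a powr \<gamma> \<le> Fn K q \<gamma> f \<mu> 1 x b * trunc k a powr \<gamma> + 1 * f x + k powr \<gamma> * \<mu> x"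
proof -
  define X where "X = trunc k a"
  have X: "0 < X" "X \<le> k" "X \<le> a" using b k by (auto simp: X_def trunc_def)
  have nn: "real n \<ge> 1" using n by simp
  have tn: "0 \<le> trunc (real n) (f x)" "trunc (real n) (f x) \<le> f x" using f nn by (auto simp: trunc_def)
  have tm: "0 \<le> trunc (real n) (\<mu> x)" "trunc (real n) (\<mu> x) \<le> \<mu> x" using \<mu> nn by (auto simp: trunc_def)
  have t1: "0 \<le> trunc 1 (f x)" "0 \<le> trunc 1 (\<mu> x)" using f \<mu> by (auto simp: trunc_def)
  have Xg: "0 \<le> X powr \<gamma>" by simp
  have 1: "K x * a powr (- q) * X powr \<gamma> \<le> K x * b powr (- q) * X powr \<gamma>"
    using b q K X by (intro mult_right_mono mult_left_mono powr_mono2') auto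
  have apos: "0 < a + 1 / real n" using b nn by (simp add: add_pos_nonneg)
  have "X \<le> a + 1 / real n" using X nn by (simp add: add_increasing2)
  then have "X powr \<gamma> \<le> (a + 1 / real n) powr \<gamma>" using X \<gamma> by (intro powr_mono2) auto
  then have r: "X powr \<gamma> / (a + 1 / real n) powr \<gamma> \<le> 1" using apos by simp
  have 2: "trunc (real n) (f x) / (a + 1 / real n) powr \<gamma> * X powr \<gamma> \<le> 1 * f x"
  proof -
    have "trunc (real n) (f x) / (a + 1 / real n) powr \<gamma> * X powr \<gamma> = trunc (real n) (f x) * (X powr \<gamma> / (a + 1 / real n) powr \<gamma>)" by simp
    also have "\<dots> \<le> f x * 1" using tn r X apos by (intro mult_mono) auto
    finally show ?thesis by simp
  qed
  have kg: "X powr \<gamma> \<le> k powr \<gamma>" using X \<gamma> by (intro powr_mono2) auto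
  have "trunc (real n) (\<mu> x) * X powr \<gamma> \<le> \<mu> x * k powr \<gamma>" using tm kg Xg \<mu> by (intro mult_mono) auto
  then have 3: "trunc (real n) (\<mu> x) * X powr \<gamma> \<le> k powr \<gamma> * \<mu> x" by (simp add: mult.commute)
  have 4: "0 \<le> trunc 1 (f x) / (b + 1) powr \<gamma> * X powr \<gamma> + trunc 1 (\<mu> x) * X powr \<gamma>" using t1 X b by simp
  show ?thesis using 1 2 3 4 unfolding Fn_def X_def[symmetric] by (simp add: algebra_simps)
qed

lemma case_i:
  fixes w :: "nat \<Rightarrow> 'a::euclidean_space \<Rightarrow> real" and \<Omega> :: "'a set"
  assumes \<Omega>: "open \<Omega>" "bounded \<Omega>" "\<Omega> \<noteq> {}" and s: "0 < s" "s < 1"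
    and q: "q > 0" and \<gamma>: "0 < \<gamma>" "\<gamma> \<le> 1" and k: "k > 0"
    and Kpos: "\<forall>x\<in>\<Omega>. K x > 0"
    and f: "set_integrable lebesgue \<Omega> f" "AE x in lebesgue. x \<in> \<Omega> \<longrightarrow> f x \<ge> 0"
    and \<mu>: "set_integrable lebesgue \<Omega> \<mu>" "AE x in lebesgue. x \<in> \<Omega> \<longrightarrow> \<mu> x \<ge> 0"
    and sol: "\<forall>n\<ge>1. (AE x in lebesgue. x \<in> \<Omega> \<longrightarrow> w n x > 0) \<and> weak_energy_sol s \<Omega> (Fn K q \<gamma> f \<mu> n) (w n)"
  shows "bounded_X0 s \<Omega> (\<lambda>n x. trunc k (w n x))"
proof -
  define C where "C = CNs DIM('a) s / 2"
  have C: "C > 0" using CNs_pos[OF s] by (simp add: C_def)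
  define R where "R = k powr (1 - \<gamma>) * (\<integral>x\<in>\<Omega>. f x \<partial>lebesgue) + k * (\<integral>x\<in>\<Omega>. \<mu> x \<partial>lebesgue)"
  define G1 where "G1 = enn2real (gag_sq s \<Omega> (w 1))"
  have \<Omega>m: "\<Omega> \<in> sets lebesgue" using \<Omega>(1) by (rule open_leb)
  have sol1: "weak_energy_sol s \<Omega> (Fn K q \<gamma> f \<mu> 1) (w 1)" and pos1: "AE x in lebesgue. x \<in> \<Omega> \<longrightarrow> w 1 x > 0"
    using sol by auto
  show ?thesis unfolding bounded_X0_def
  proof (intro exI allI impI conjI)
    fix n :: nat assume n: "n \<ge> 1"
    have soln: "weak_energy_sol s \<Omega> (Fn K q \<gamma> f \<mu> n) (w n)" and posn: "AE x in lebesgue. x \<in> \<Omega> \<longrightarrow> w n x > 0"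
      using sol n by auto
    have Xn: "X0 s \<Omega> (w n)" and zn: "\<forall>x. x \<notin> \<Omega> \<longrightarrow> w n x = 0"
      using soln unfolding weak_energy_sol_def by blast+
    have [measurable]: "w n \<in> borel_measurable lebesgue" using Xn by (simp add: X0_def)
    define h where "h x = trunc k (w n x)" for x
    have hm: "h \<in> borel_measurable lebesgue" unfolding h_def trunc_def by measurable
    have h0: "AE x in lebesgue. x \<notin> \<Omega> \<longrightarrow> h x = 0" using zn k by (auto simp: h_def trunc_0)
    have hpair: "AE z in MM. z \<in> D_set \<Omega> \<longrightarrow> (h (fst z) - h (snd z))\<^sup>2 \<le> 1 * (w n (fst z) - w n (snd z))\<^sup>2"
      using trunc_lip by (auto simp: h_def abs_le_square_iff[symmetric])
    have Xh: "X0 s \<Omega> h" by (rule X0_comp(1)[OF \<Omega>m Xn hm h0 _ hpair]) simp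
    have cmp: "AE x in lebesgue. x \<in> \<Omega> \<longrightarrow> w 1 x \<le> w n x"
      by (rule comparison[OF \<Omega>(1) n s sol1 soln pos1 posn Kpos q \<gamma>(1) f(2) \<mu>(2)])
    have pair: "AE z in MM. z \<in> D_set \<Omega> \<longrightarrow> 1 * (h (fst z) - h (snd z))\<^sup>2 \<le> (w n (fst z) - w n (snd z)) * (h (fst z) - h (snd z))"
      by (auto simp: h_def trunc_key)
    have ptF: "AE x in lebesgue. x \<in> \<Omega> \<longrightarrow> Fn K q \<gamma> f \<mu> n x (w n x) * h x \<le> Fn K q \<gamma> f \<mu> 1 x (w 1 x) * h x + k powr (1 - \<gamma>) * f x + k * \<mu> x"
      using cmp pos1 posn f(2) \<mu>(2)
    proof eventually_elim
      case (elim x)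
      show ?case
      proof
        assume x: "x \<in> \<Omega>"
        show "Fn K q \<gamma> f \<mu> n x (w n x) * h x \<le> Fn K q \<gamma> f \<mu> 1 x (w 1 x) * h x + k powr (1 - \<gamma>) * f x + k * \<mu> x"
          unfolding h_def using elim x Kpos q \<gamma> k n by (intro ptF_i) (auto simp: less_imp_le)
      qed
    qed
    have est: "C * (1 * enn2real (gag_sq s \<Omega> h)) \<le> C * (1 / 2 * G1 + 1 / (2 * 1) * enn2real (gag_sq s \<Omega> h)) + R"
      using main_est[OF \<Omega>(1) s sol1 soln Xh Xh _ _ pair ptF f(1) \<mu>(1), where t=1]
      unfolding C_def G1_def R_def by (simp add: add.assoc)
    then have "enn2real (gag_sq s \<Omega> h) \<le> G1 + 2 * R / C" using C by (simp add: field_simps)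
    then have "X0_norm s \<Omega> h \<le> sqrt (G1 + 2 * R / C)" by (simp add: X0_norm_def)
    then show "X0_norm s \<Omega> (\<lambda>x. trunc k (w n x)) \<le> sqrt (G1 + 2 * R / C)" by (simp add: h_def[abs_def])
    show "X0 s \<Omega> (\<lambda>x. trunc k (w n x))" using Xh by (simp add: h_def[abs_def])
  qed
qed

lemma enn2real_le_mult:
  assumes "a \<le> ennreal L * b" "b < \<infinity>" "L \<ge> 0"
  shows "enn2real a \<le> L * enn2real b"
proof -
  have "enn2real a \<le> enn2real (ennreal L * b)"
    using assms by (intro enn2real_mono) (auto simp: ennreal_mult_less_top)
  also have "\<dots> = L * enn2real b" using assms by (simp add: enn2real_mult)
  finally show ?thesis .
qed

lemma w_nonneg_AE:
  assumes "AE x in lebesgue. x \<in> \<Omega> \<longrightarrow> u x > 0" "\<forall>x. x \<notin> \<Omega> \<longrightarrow> u x = (0::real)"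
  shows "AE x in lebesgue. u x \<ge> 0"
  using assms(1) by eventually_elim (use assms(2) in \<open>auto simp: less_imp_le\<close>)

lemma case_iia:
  fixes w :: "nat \<Rightarrow> 'a::euclidean_space \<Rightarrow> real" and \<Omega> :: "'a set"
  assumes \<Omega>: "open \<Omega>" "bounded \<Omega>" "\<Omega> \<noteq> {}" and s: "0 < s" "s < 1"
    and q: "q > 0" and \<gamma>: "1 < \<gamma>" and k: "k > 0"
    and Kpos: "\<forall>x\<in>\<Omega>. K x > 0"
    and f: "set_integrable lebesgue \<Omega> f" "AE x in lebesgue. x \<in> \<Omega> \<longrightarrow> f x \<ge> 0"
    and \<mu>: "set_integrable lebesgue \<Omega> \<mu>" "AE x in lebesgue. x \<in> \<Omega> \<longrightarrow> \<mu> x \<ge> 0"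
    and sol: "\<forall>n\<ge>1. (AE x in lebesgue. x \<in> \<Omega> \<longrightarrow> w n x > 0) \<and> weak_energy_sol s \<Omega> (Fn K q \<gamma> f \<mu> n) (w n)"
  shows "\<exists>M. \<forall>n\<ge>1. X0 s \<Omega> (\<lambda>x. trunc k (w n x) powr ((\<gamma> + 1) / 2)) \<and>
            enn2real (gag_sq s \<Omega> (\<lambda>x. trunc k (w n x) powr ((\<gamma> + 1) / 2))) \<le> M"
proof -
  define p where "p = (\<gamma> + 1) / 2"
  have p1: "p \<ge> 1" "p > 0" using \<gamma> by (auto simp: p_def)
  define e where "e = \<gamma> / p"
  have e1: "e \<ge> 1" using \<gamma> by (simp add: e_def p_def field_simps)
  have pe: "p * e = \<gamma>" using p1 by (simp add: e_def)
  define L where "L = (e * (k powr p) powr (e - 1))\<^sup>2"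
  have L0: "L \<ge> 0" by (simp add: L_def)
  define t where "t = p * (L + 1)"
  have t: "t > 0" using p1 L0 by (simp add: t_def)
  define C where "C = CNs DIM('a) s / 2"
  have C: "C > 0" using CNs_pos[OF s] by (simp add: C_def)
  define R where "R = 1 * (\<integral>x\<in>\<Omega>. f x \<partial>lebesgue) + k powr \<gamma> * (\<integral>x\<in>\<Omega>. \<mu> x \<partial>lebesgue)"
  define G1 where "G1 = enn2real (gag_sq s \<Omega> (w 1))"
  have \<Omega>m: "\<Omega> \<in> sets lebesgue" using \<Omega>(1) by (rule open_leb)
  have sol1: "weak_energy_sol s \<Omega> (Fn K q \<gamma> f \<mu> 1) (w 1)" and pos1: "AE x in lebesgue. x \<in> \<Omega> \<longrightarrow> w 1 x > 0"
    using sol by auto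
  show ?thesis
  proof (intro exI allI impI conjI)
    fix n :: nat assume n: "n \<ge> 1"
    have soln: "weak_energy_sol s \<Omega> (Fn K q \<gamma> f \<mu> n) (w n)" and posn: "AE x in lebesgue. x \<in> \<Omega> \<longrightarrow> w n x > 0"
      using sol n by auto
    have Xn: "X0 s \<Omega> (w n)" and zn: "\<forall>x. x \<notin> \<Omega> \<longrightarrow> w n x = 0"
      using soln unfolding weak_energy_sol_def by blast+
    have [measurable]: "w n \<in> borel_measurable lebesgue" using Xn by (simp add: X0_def)
    have nnAE: "AE z in MM. w n (fst z) \<ge> 0 \<and> w n (snd z) \<ge> 0"
      by (rule AE_pair_both[OF w_nonneg_AE[OF posn zn]])
    define h where "h x = trunc k (w n x) powr p" for x
    define T where "T x = trunc k (w n x) powr \<gamma>" for x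
    have hm: "h \<in> borel_measurable lebesgue" unfolding h_def trunc_def by measurable
    have Tm: "T \<in> borel_measurable lebesgue" unfolding T_def trunc_def by measurable
    have h0: "AE x in lebesgue. x \<notin> \<Omega> \<longrightarrow> h x = 0" using zn k by (auto simp: h_def trunc_0)
    have T0: "AE x in lebesgue. x \<notin> \<Omega> \<longrightarrow> T x = 0" using zn k by (auto simp: T_def trunc_0)
    have lipgen: "\<bar>trunc k a powr r - trunc k b powr r\<bar> \<le> r * k powr (r - 1) * \<bar>a - b\<bar>"
      if "a \<ge> 0" "b \<ge> 0" "r \<ge> 1" for a b r
    proof -
      have "\<bar>trunc k a powr r - trunc k b powr r\<bar> \<le> r * k powr (r - 1) * \<bar>trunc k a - trunc k b\<bar>"
        using that k by (intro pow_lip) (auto simp: trunc_def)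
      also have "\<dots> \<le> r * k powr (r - 1) * \<bar>a - b\<bar>"
        using that by (intro mult_left_mono trunc_lip) auto
      finally show ?thesis .
    qed
    have hpair: "AE z in MM. z \<in> D_set \<Omega> \<longrightarrow> (h (fst z) - h (snd z))\<^sup>2 \<le> (p * k powr (p - 1))\<^sup>2 * (w n (fst z) - w n (snd z))\<^sup>2"
      using nnAE
    proof eventually_elim
      case (elim z)
      have "\<bar>h (fst z) - h (snd z)\<bar> \<le> \<bar>p * k powr (p - 1)\<bar> * \<bar>w n (fst z) - w n (snd z)\<bar>"
        using lipgen[of "w n (fst z)" "w n (snd z)" p] elim p1 by (simp add: h_def)
      then have "\<bar>h (fst z) - h (snd z)\<bar> \<le> \<bar>p * k powr (p - 1) * (w n (fst z) - w n (snd z))\<bar>" by (simp add: abs_mult)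
      then show ?case by (simp add: abs_le_square_iff power_mult_distrib)
    qed
    have Xh: "X0 s \<Omega> h" by (rule X0_comp(1)[OF \<Omega>m Xn hm h0 _ hpair]) simp
    have Tpair: "AE z in MM. z \<in> D_set \<Omega> \<longrightarrow> (T (fst z) - T (snd z))\<^sup>2 \<le> (\<gamma> * k powr (\<gamma> - 1))\<^sup>2 * (w n (fst z) - w n (snd z))\<^sup>2"
      using nnAE
    proof eventually_elim
      case (elim z)
      have "\<bar>T (fst z) - T (snd z)\<bar> \<le> \<bar>\<gamma> * k powr (\<gamma> - 1)\<bar> * \<bar>w n (fst z) - w n (snd z)\<bar>"
        using lipgen[of "w n (fst z)" "w n (snd z)" \<gamma>] elim \<gamma> by (simp add: T_def)
      then have "\<bar>T (fst z) - T (snd z)\<bar> \<le> \<bar>\<gamma> * k powr (\<gamma> - 1) * (w n (fst z) - w n (snd z))\<bar>" by (simp add: abs_mult)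
      then show ?case by (simp add: abs_le_square_iff power_mult_distrib)
    qed
    have XT: "X0 s \<Omega> T" by (rule X0_comp(1)[OF \<Omega>m Xn Tm T0 _ Tpair]) simp
    have THpair: "AE z in MM. z \<in> D_set \<Omega> \<longrightarrow> (T (fst z) - T (snd z))\<^sup>2 \<le> L * (h (fst z) - h (snd z))\<^sup>2"
      using nnAE
    proof eventually_elim
      case (elim z)
      define X where "X = trunc k (w n (fst z))"
      define Y where "Y = trunc k (w n (snd z))"
      have XY: "0 \<le> X" "X \<le> k" "0 \<le> Y" "Y \<le> k" using elim k by (auto simp: X_def Y_def trunc_def)
      have TX: "T (fst z) = (X powr p) powr e" "T (snd z) = (Y powr p) powr e"
        by (simp_all add: T_def X_def Y_def powr_powr pe)
      have "\<bar>(X powr p) powr e - (Y powr p) powr e\<bar> \<le> e * (k powr p) powr (e - 1) * \<bar>X powr p - Y powr p\<bar>"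
        using XY e1 p1 by (intro pow_lip) (auto intro: powr_mono2)
      then have "\<bar>T (fst z) - T (snd z)\<bar> \<le> \<bar>e * (k powr p) powr (e - 1) * (h (fst z) - h (snd z))\<bar>"
        using e1 by (simp add: TX h_def X_def[symmetric] Y_def[symmetric] abs_mult)
      then show ?case by (simp add: abs_le_square_iff power_mult_distrib L_def)
    qed
    have gTh: "gag_sq s \<Omega> T \<le> ennreal L * gag_sq s \<Omega> h"
      by (rule X0_comp(2)[OF \<Omega>m Xh Tm T0 L0 THpair])
    have GT: "enn2real (gag_sq s \<Omega> T) \<le> L * enn2real (gag_sq s \<Omega> h)"
      using gTh Xh L0 by (intro enn2real_le_mult) (auto simp: X0_def)
    have cmp: "AE x in lebesgue. x \<in> \<Omega> \<longrightarrow> w 1 x \<le> w n x"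
      by (rule comparison[OF \<Omega>(1) n s sol1 soln pos1 posn Kpos q _ f(2) \<mu>(2)]) (use \<gamma> in simp)
    have pair: "AE z in MM. z \<in> D_set \<Omega> \<longrightarrow> (1 / p) * (h (fst z) - h (snd z))\<^sup>2 \<le> (w n (fst z) - w n (snd z)) * (T (fst z) - T (snd z))"
      using nnAE
    proof eventually_elim
      case (elim z)
      define X where "X = trunc k (w n (fst z))"
      define Y where "Y = trunc k (w n (snd z))"
      have XY: "0 \<le> X" "0 \<le> Y" using elim k by (auto simp: X_def Y_def trunc_def)
      have "(X powr p - Y powr p)\<^sup>2 \<le> p * ((X - Y) * (X powr \<gamma> - Y powr \<gamma>))"
        using pow_key[of X Y \<gamma>] XY \<gamma> by (simp add: p_def)
      also have "\<dots> \<le> p * ((w n (fst z) - w n (snd z)) * (X powr \<gamma> - Y powr \<gamma>))"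
        using trunc_pow_mono[of "w n (fst z)" "w n (snd z)" k \<gamma>] elim k \<gamma> p1
        by (intro mult_left_mono) (auto simp: X_def Y_def)
      finally have "(1 / p) * (X powr p - Y powr p)\<^sup>2 \<le> (w n (fst z) - w n (snd z)) * (X powr \<gamma> - Y powr \<gamma>)"
        using p1 by (simp add: field_simps)
      then show ?case by (simp add: h_def T_def X_def Y_def)
    qed
    have ptF: "AE x in lebesgue. x \<in> \<Omega> \<longrightarrow> Fn K q \<gamma> f \<mu> n x (w n x) * T x \<le> Fn K q \<gamma> f \<mu> 1 x (w 1 x) * T x + 1 * f x + k powr \<gamma> * \<mu> x"
      using cmp pos1 posn f(2) \<mu>(2)
    proof eventually_elim
      case (elim x)
      show ?case
      proof
        assume x: "x \<in> \<Omega>"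
        show "Fn K q \<gamma> f \<mu> n x (w n x) * T x \<le> Fn K q \<gamma> f \<mu> 1 x (w 1 x) * T x + 1 * f x + k powr \<gamma> * \<mu> x"
          unfolding T_def using elim x Kpos q \<gamma> k n by (intro ptF_ii) (auto simp: less_imp_le)
      qed
    qed
    have est: "C * ((1 / p) * enn2real (gag_sq s \<Omega> h)) \<le> C * (t / 2 * G1 + 1 / (2 * t) * enn2real (gag_sq s \<Omega> T)) + R"
      using main_est[OF \<Omega>(1) s sol1 soln XT Xh _ t pair ptF f(1) \<mu>(1)] p1
      unfolding C_def G1_def R_def by (simp add: add.assoc)
    define Gh where "Gh = enn2real (gag_sq s \<Omega> h)"
    have Gh0: "Gh \<ge> 0" by (simp add: Gh_def)
    have "1 / (2 * t) * enn2real (gag_sq s \<Omega> T) \<le> 1 / (2 * t) * (L * Gh)"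
      using GT t by (intro mult_left_mono) (auto simp: Gh_def)
    also have "\<dots> \<le> 1 / (2 * p) * Gh"
    proof -
      have "L / (L + 1) \<le> 1" using L0 by simp
      have "L / (2 * (p * (L + 1))) = (L / (L + 1)) * (1 / (2 * p))" using p1 L0 by (simp add: field_simps)
      also have "\<dots> \<le> 1 * (1 / (2 * p))" using \<open>L / (L + 1) \<le> 1\<close> p1 by (intro mult_right_mono) auto
      finally have "L / (2 * (p * (L + 1))) \<le> 1 / (2 * p)" by simp
      then have "L / (2 * (p * (L + 1))) * Gh \<le> 1 / (2 * p) * Gh" using Gh0 by (rule mult_right_mono)
      then show ?thesis by (simp add: t_def)
    qed
    finally have "C * (1 / p * Gh) \<le> C * (t / 2 * G1 + 1 / (2 * p) * Gh) + R"
      using est C unfolding Gh_def[symmetric] by (smt (verit) mult_left_mono)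
    then have "C / (2 * p) * Gh \<le> C * t / 2 * G1 + R" using p1 by (simp add: field_simps)
    then have "Gh \<le> (C * t / 2 * G1 + R) * (2 * p) / C" using C p1 by (simp add: field_simps)
    then show "enn2real (gag_sq s \<Omega> (\<lambda>x. trunc k (w n x) powr ((\<gamma> + 1) / 2))) \<le> (C * t / 2 * G1 + R) * (2 * p) / C"
      by (simp add: Gh_def h_def[abs_def] p_def)
    show "X0 s \<Omega> (\<lambda>x. trunc k (w n x) powr ((\<gamma> + 1) / 2))" using Xh by (simp add: h_def[abs_def] p_def)
  qed
qed

lemma linear_basis_bound:
  fixes D :: "'a::euclidean_space \<Rightarrow> real"
  assumes "linear D"
  shows "\<bar>D v\<bar> \<le> norm v * (\<Sum>i\<in>Basis. \<bar>D i\<bar>)"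
proof -
  have "D v = D (\<Sum>i\<in>Basis. (v \<bullet> i) *\<^sub>R i)" by (simp add: euclidean_representation)
  also have "\<dots> = (\<Sum>i\<in>Basis. (v \<bullet> i) * D i)"
    using assms by (simp add: linear_sum linear_scale)
  finally have "\<bar>D v\<bar> = \<bar>\<Sum>i\<in>Basis. (v \<bullet> i) * D i\<bar>" by simp
  also have "\<dots> \<le> (\<Sum>i\<in>Basis. \<bar>v \<bullet> i\<bar> * \<bar>D i\<bar>)" by (rule order_trans[OF sum_abs]) (simp add: abs_mult)
  also have "\<dots> \<le> (\<Sum>i\<in>Basis. norm v * \<bar>D i\<bar>)"
    by (intro sum_mono mult_right_mono) (auto simp: Basis_le_norm)
  finally show ?thesis by (simp add: sum_distrib_left)
qed

lemma Cc_props: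
  fixes \<phi> :: "'a::euclidean_space \<Rightarrow> real"
  assumes "Cc_inf \<Omega> \<phi>"
  shows "continuous_on UNIV \<phi>" "\<exists>M. \<forall>x. \<bar>\<phi> x\<bar> \<le> M" "\<exists>L. \<forall>x y. \<bar>\<phi> x - \<phi> y\<bar> \<le> L * norm (x - y)"
proof -
  have sm: "\<And>k. Ck_on k \<phi> UNIV" using assms by (simp add: Cc_inf_def smooth_on_def)
  show cont: "continuous_on UNIV \<phi>" using sm[of 0] by simp
  define S where "S = closure {x. \<phi> x \<noteq> 0}"
  have S: "compact S" using assms by (simp add: Cc_inf_def S_def)
  have out: "\<phi> x = 0" if "x \<notin> S" for x using that closure_subset[of "{x. \<phi> x \<noteq> 0}"] by (auto simp: S_def)
  obtain M where M: "\<forall>y\<in>\<phi> ` S. norm y \<le> M"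
    using compact_imp_bounded[OF compact_continuous_image[OF continuous_on_subset[OF cont] S]]
    by (auto simp: bounded_iff)
  show "\<exists>M. \<forall>x. \<bar>\<phi> x\<bar> \<le> M"
  proof (intro exI allI)
    fix x show "\<bar>\<phi> x\<bar> \<le> max M 0" using M out[of x] by (cases "x \<in> S") auto
  qed
  have s1: "\<phi> differentiable_on UNIV" "\<forall>i\<in>Basis. continuous_on UNIV (\<lambda>x. frechet_derivative \<phi> (at x) i)"
    using sm[of 1] by (simp_all add: One_nat_def)
  define D where "D x = frechet_derivative \<phi> (at x)" for x
  have der: "(\<phi> has_derivative D x) (at x)" for x
    using s1(1) by (simp add: D_def differentiable_on_def frechet_derivative_works[symmetric])
  have lin: "linear (D x)" for x using der[of x] by (simp add: has_derivative_linear)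
  define g where "g x = (\<Sum>i\<in>Basis. \<bar>D x i\<bar>)" for x
  have gc: "continuous_on UNIV g"
    unfolding g_def D_def using s1(2) by (intro continuous_intros) auto
  obtain B where B: "\<forall>y\<in>g ` S. norm y \<le> B"
    using compact_imp_bounded[OF compact_continuous_image[OF continuous_on_subset[OF gc] S]]
    by (auto simp: bounded_iff)
  have D0: "D x = (\<lambda>v. 0)" if "x \<notin> S" for x
  proof -
    have o: "open (- S)" using S by (simp add: compact_imp_closed open_Compl)
    have d: "((\<lambda>_. 0) has_derivative (\<lambda>v. 0)) (at x)" by simp
    have "(\<phi> has_derivative (\<lambda>v. 0)) (at x)"
      by (rule has_derivative_transform_within_open[OF d o]) (use that out in auto)
    then show ?thesis unfolding D_def by (rule frechet_derivative_at[symmetric])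
  qed
  have gB: "g x \<le> max B 0" for x
  proof (cases "x \<in> S")
    case True then show ?thesis using B by fastforce
  next
    case False then show ?thesis by (simp add: g_def D0)
  qed
  have on: "onorm (D x) \<le> max B 0" for x
  proof (rule onorm_le)
    fix v
    have "\<bar>D x v\<bar> \<le> norm v * g x" unfolding g_def by (rule linear_basis_bound[OF lin])
    also have "\<dots> \<le> max B 0 * norm v" using gB[of x] by (simp add: mult.commute mult_left_mono)
    finally show "norm (D x v) \<le> max B 0 * norm v" by simp
  qed
  show "\<exists>L. \<forall>x y. \<bar>\<phi> x - \<phi> y\<bar> \<le> L * norm (x - y)"
  proof (intro exI allI)
    fix x y
    show "\<bar>\<phi> x - \<phi> y\<bar> \<le> max B 0 * norm (x - y)"
      using differentiable_bound[OF convex_UNIV, of \<phi> D "max B 0" x y] der on by simp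
  qed
qed

lemma ennreal_term_le_suminf: "f j \<le> (\<Sum>i. f i :: ennreal)"
  using sum_le_suminf[of f "{j}"] by auto

lemma emeasure_ball_eq:
  fixes c :: "'a::euclidean_space"
  assumes "r \<ge> 0"
  shows "emeasure lborel (ball c r) = ennreal (r ^ DIM('a) * measure lborel (ball (0::'a) 1))"
proof -
  have "emeasure lborel (ball c r) = ennreal (measure lborel (ball c r))"
    using emeasure_lborel_ball_finite[of c r] by (intro emeasure_eq_ennreal_measure) auto
  then show ?thesis using content_ball_conv_unit_ball[OF assms, of c] by simp
qed

lemma radial_sum_finite:
  fixes F :: "'a::euclidean_space \<Rightarrow> ennreal"
  assumes F: "\<And>h. F h \<le> (\<Sum>j. ennreal (c j) * indicator (ball 0 (\<rho> j)) h)"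
    and c: "\<And>j. c j \<ge> 0" and \<rho>: "\<And>j. \<rho> j \<ge> 0"
    and sm: "summable (\<lambda>j. c j * \<rho> j ^ DIM('a))"
  shows "(\<integral>\<^sup>+h. F h \<partial>lborel) < \<infinity>"
proof -
  define V where "V = measure lborel (ball (0::'a) 1)"
  have V: "V \<ge> 0" by (simp add: V_def)
  have "(\<integral>\<^sup>+h. F h \<partial>lborel) \<le> (\<integral>\<^sup>+h. (\<Sum>j. ennreal (c j) * indicator (ball (0::'a) (\<rho> j)) h) \<partial>lborel)"
    using F by (simp add: nn_integral_mono)
  also have "\<dots> = (\<Sum>j. \<integral>\<^sup>+h. ennreal (c j) * indicator (ball (0::'a) (\<rho> j)) h \<partial>lborel)"
    by (rule nn_integral_suminf) (auto intro!: borel_measurable_times_ennreal borel_measurable_indicator)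
  also have "\<dots> = (\<Sum>j. ennreal (c j) * emeasure lborel (ball (0::'a) (\<rho> j)))"
    by (simp add: nn_integral_cmult_indicator)
  also have "\<dots> = (\<Sum>j. ennreal (c j * \<rho> j ^ DIM('a) * V))"
  proof (rule suminf_cong)
    fix j
    have "emeasure lborel (ball (0::'a) (\<rho> j)) = ennreal (\<rho> j ^ DIM('a) * V)"
      using emeasure_ball_eq[OF \<rho>[of j], of 0] by (simp add: V_def)
    moreover have "ennreal (c j * (\<rho> j ^ DIM('a) * V)) = ennreal (c j) * ennreal (\<rho> j ^ DIM('a) * V)"
      by (rule ennreal_mult) (use c \<rho> V in auto)
    ultimately show "ennreal (c j) * emeasure lborel (ball (0::'a) (\<rho> j)) = ennreal (c j * \<rho> j ^ DIM('a) * V)"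
      by (simp only: mult.assoc)
  qed
  also have "\<dots> = ennreal (\<Sum>j. c j * \<rho> j ^ DIM('a) * V)"
    by (rule suminf_ennreal2) (use c \<rho> V in simp, rule summable_mult2[OF sm])
  also have "\<dots> < \<infinity>" by simp
  finally show ?thesis .
qed

lemma ex_dyadic_small:
  fixes r :: real
  assumes "0 < r" "r \<le> 1"
  shows "\<exists>j::nat. (1/2) ^ Suc j < r \<and> r \<le> (1/2) ^ j"
proof -
  obtain j0 where j0: "(1/2::real) ^ j0 < r" using real_arch_pow_inv[of r "1/2"] assms by auto
  have "(1/2::real) ^ Suc j0 \<le> (1/2) ^ j0" by simp
  then have "\<exists>j. (1/2::real) ^ Suc j < r" using j0 by (intro exI[of _ j0]) linarith
  then obtain j where j: "(1/2::real) ^ Suc j < r" "\<And>m. m < j \<Longrightarrow> \<not> (1/2::real) ^ Suc m < r"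
    using exists_least_iff[of "\<lambda>j. (1/2::real) ^ Suc j < r"] by blast
  show ?thesis
  proof (cases j)
    case 0 then show ?thesis using j assms by (intro exI[of _ 0]) auto
  next
    case (Suc i) then show ?thesis using j(1) j(2)[of i] by (intro exI[of _ j]) auto
  qed
qed

lemma ex_dyadic_large:
  fixes r :: real
  assumes "1 \<le> r"
  shows "\<exists>j::nat. 2 ^ j \<le> r \<and> r < 2 ^ Suc j"
proof -
  obtain j0 where j0: "r < (2::real) ^ j0" using real_arch_pow[of 2 r] by auto
  have "(2::real) ^ j0 \<le> 2 ^ Suc j0" by simp
  then have "\<exists>j. r < (2::real) ^ Suc j" using j0 by (intro exI[of _ j0]) linarith
  then obtain j where j: "r < (2::real) ^ Suc j" "\<And>m. m < j \<Longrightarrow> \<not> r < (2::real) ^ Suc m"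
    using exists_least_iff[of "\<lambda>j. r < (2::real) ^ Suc j"] by blast
  show ?thesis
  proof (cases j)
    case 0 then show ?thesis using j assms by (intro exI[of _ 0]) auto
  next
    case (Suc i) then show ?thesis using j(1) j(2)[of i] by (intro exI[of _ j]) (auto simp: not_less)
  qed
qed

lemma half_pow_powr: "((1/2::real) ^ j) powr a = (2 powr (- a)) ^ j"
proof -
  have "(1/2::real) ^ j = 2 powr (- real j)"
    by (simp add: powr_minus_divide powr_realpow power_one_over)
  then have "((1/2::real) ^ j) powr a = 2 powr (- real j * a)" by (simp add: powr_powr)
  also have "\<dots> = (2 powr (- a)) ^ j" by (simp add: powr_power)
  finally show ?thesis .
qed

lemma two_pow_powr: "((2::real) ^ j) powr b = (2 powr b) ^ j"
proof -
  have "(2::real) ^ j = 2 powr (real j)" by (simp add: powr_realpow)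
  then have "((2::real) ^ j) powr b = 2 powr (real j * b)" by (simp add: powr_powr)
  also have "\<dots> = (2 powr b) ^ j" by (simp add: powr_power)
  finally show ?thesis .
qed

lemma near_finite:
  fixes a :: real
  assumes a: "a + real DIM('a::euclidean_space) > 0"
  shows "(\<integral>\<^sup>+h. ennreal (indicator (ball (0::'a) 1) h * norm h powr a) \<partial>lborel) < \<infinity>"
proof (rule radial_sum_finite)
  define c where "c j = 2 powr \<bar>a\<bar> * (2 powr (- a)) ^ j" for j :: nat
  define \<rho> where "\<rho> j = 2 * (1/2::real) ^ j" for j :: nat
  show "\<And>j. c j \<ge> 0" by (simp add: c_def)
  show "\<And>j. \<rho> j \<ge> 0" by (simp add: \<rho>_def)
  have "c j * \<rho> j ^ DIM('a) = 2 powr \<bar>a\<bar> * 2 ^ DIM('a) * (2 powr (- a) * (1/2) ^ DIM('a)) ^ j" for j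
  proof -
    have e1: "\<rho> j ^ DIM('a) = 2 ^ DIM('a) * ((1/2::real) ^ DIM('a)) ^ j"
      unfolding \<rho>_def power_mult_distrib by (simp only: power_mult[symmetric] mult.commute)
    have e2: "(2 powr (- a)) ^ j * ((1/2::real) ^ DIM('a)) ^ j = (2 powr (- a) * (1/2) ^ DIM('a)) ^ j"
      by (rule power_mult_distrib[symmetric])
    show ?thesis unfolding c_def e1 using e2 by (simp only: mult_ac)
  qed
  note eq = this
  have "2 powr (- (a + real DIM('a))) = 2 powr (- a) * 2 powr (- real DIM('a))"
    by (simp add: powr_add[symmetric])
  also have "2 powr (- real DIM('a)) = (1/2::real) ^ DIM('a)"
    by (simp add: powr_minus_divide powr_realpow power_one_over)
  finally have r: "2 powr (- a) * (1/2::real) ^ DIM('a) = 2 powr (- (a + real DIM('a)))" by simp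
  have r1: "2 powr (- (a + real DIM('a))) < (1::real)" using a by (intro powr_less_one) auto
  have "summable (\<lambda>j. 2 powr \<bar>a\<bar> * 2 ^ DIM('a) * (2 powr (- (a + real DIM('a)))) ^ j)"
    by (rule summable_mult, rule summable_geometric) (use r1 in simp)
  then show "summable (\<lambda>j. c j * \<rho> j ^ DIM('a))" by (simp only: eq r)
  fix h :: 'a
  show "ennreal (indicator (ball 0 1) h * norm h powr a) \<le> (\<Sum>j. ennreal (c j) * indicator (ball 0 (\<rho> j)) h)"
  proof (cases "h \<in> ball 0 1 \<and> h \<noteq> 0")
    case False then show ?thesis by auto
  next
    case True
    define r where "r = norm h"
    have r: "0 < r" "r \<le> 1" using True by (auto simp: r_def)
    obtain j where j: "(1/2) ^ Suc j < r" "r \<le> (1/2) ^ j" using ex_dyadic_small[OF r] by blast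
    have inb: "h \<in> ball 0 (\<rho> j)" using j by (simp add: \<rho>_def r_def[symmetric])
    have "r powr a \<le> c j"
    proof (cases "a \<ge> 0")
      case True
      have "r powr a \<le> ((1/2) ^ j) powr a" using j r True by (intro powr_mono2) auto
      also have "\<dots> = (2 powr (- a)) ^ j" by (rule half_pow_powr)
      also have "\<dots> \<le> 2 powr \<bar>a\<bar> * (2 powr (- a)) ^ j"
        using True by (intro mult_le_cancel_right1[THEN iffD2]) (auto intro: ge_one_powr_ge_zero)
      finally show ?thesis by (simp add: c_def)
    next
      case False
      have "r powr a \<le> ((1/2) ^ Suc j) powr a" using j r False by (intro powr_mono2') auto
      also have "\<dots> = (2 powr (- a)) ^ Suc j" by (rule half_pow_powr)
      also have "\<dots> = 2 powr \<bar>a\<bar> * (2 powr (- a)) ^ j" using False by simp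
      finally show ?thesis by (simp add: c_def)
    qed
    then have "ennreal (indicator (ball 0 1) h * norm h powr a) \<le> ennreal (c j) * indicator (ball 0 (\<rho> j)) h"
      using True inb by (simp add: r_def ennreal_leI)
    also have "\<dots> \<le> (\<Sum>j. ennreal (c j) * indicator (ball 0 (\<rho> j)) h)" by (rule ennreal_term_le_suminf)
    finally show ?thesis .
  qed
qed

lemma far_finite:
  fixes b :: real
  assumes b: "b + real DIM('a::euclidean_space) < 0"
  shows "(\<integral>\<^sup>+h. ennreal (indicator (- ball (0::'a) 1) h * norm h powr b) \<partial>lborel) < \<infinity>"
proof (rule radial_sum_finite)
  define c where "c j = (2 powr b) ^ j" for j :: nat
  define \<rho> where "\<rho> j = 2 * (2::real) ^ j" for j :: nat
  show "\<And>j. c j \<ge> 0" by (simp add: c_def)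
  show "\<And>j. \<rho> j \<ge> 0" by (simp add: \<rho>_def)
  have "c j * \<rho> j ^ DIM('a) = 2 ^ DIM('a) * (2 powr b * 2 ^ DIM('a)) ^ j" for j
  proof -
    have e1: "\<rho> j ^ DIM('a) = 2 ^ DIM('a) * ((2::real) ^ DIM('a)) ^ j"
      unfolding \<rho>_def power_mult_distrib by (simp only: power_mult[symmetric] mult.commute)
    have e2: "(2 powr b) ^ j * ((2::real) ^ DIM('a)) ^ j = (2 powr b * 2 ^ DIM('a)) ^ j"
      by (rule power_mult_distrib[symmetric])
    show ?thesis unfolding c_def e1 using e2 by (simp only: mult_ac)
  qed
  note eq = this
  have r: "2 powr b * (2::real) ^ DIM('a) = 2 powr (b + real DIM('a))"
    by (simp add: powr_add powr_realpow)
  have r1: "2 powr (b + real DIM('a)) < (1::real)" using b by (intro powr_less_one) auto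
  have "summable (\<lambda>j. 2 ^ DIM('a) * (2 powr (b + real DIM('a))) ^ j)"
    by (rule summable_mult, rule summable_geometric) (use r1 in simp)
  then show "summable (\<lambda>j. c j * \<rho> j ^ DIM('a))" by (simp only: eq r)
  fix h :: 'a
  show "ennreal (indicator (- ball 0 1) h * norm h powr b) \<le> (\<Sum>j. ennreal (c j) * indicator (ball 0 (\<rho> j)) h)"
  proof (cases "h \<in> - ball 0 1")
    case False then show ?thesis by auto
  next
    case True
    define r where "r = norm h"
    have r: "1 \<le> r" using True by (auto simp: r_def)
    obtain j where j: "2 ^ j \<le> r" "r < 2 ^ Suc j" using ex_dyadic_large[OF r] by blast
    have inb: "h \<in> ball 0 (\<rho> j)" using j by (simp add: \<rho>_def r_def[symmetric])
    have "r powr b \<le> (2 ^ j) powr b" using j r b by (intro powr_mono2') auto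
    also have "\<dots> = c j" by (simp add: c_def two_pow_powr)
    finally have "r powr b \<le> c j" .
    then have "ennreal (indicator (- ball 0 1) h * norm h powr b) \<le> ennreal (c j) * indicator (ball 0 (\<rho> j)) h"
      using True inb by (simp add: r_def ennreal_leI)
    also have "\<dots> \<le> (\<Sum>j. ennreal (c j) * indicator (ball 0 (\<rho> j)) h)" by (rule ennreal_term_le_suminf)
    finally show ?thesis .
  qed
qed

lemma transl:
  fixes G :: "'a::euclidean_space \<Rightarrow> ennreal"
  assumes G[measurable]: "G \<in> borel_measurable borel" and sym: "\<And>h. G (- h) = G h"
  shows "(\<integral>\<^sup>+y. G (y - x) \<partial>lebesgue) = integral\<^sup>N lborel G"
    and "(\<integral>\<^sup>+y. G (x - y) \<partial>lebesgue) = integral\<^sup>N lborel G"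
proof -
  have "(\<integral>\<^sup>+y. G (y - x) \<partial>lebesgue) = (\<integral>\<^sup>+y. G (y - x) \<partial>lborel)" by (rule nn_integral_completion)
  also have "\<dots> = (\<integral>\<^sup>+y. G ((+) (- x) y) \<partial>lborel)" by (simp add: algebra_simps)
  also have "\<dots> = integral\<^sup>N (distr lborel borel ((+) (- x))) G"
    by (rule nn_integral_distr[symmetric]) auto
  also have "\<dots> = integral\<^sup>N lborel G" by (simp add: lborel_distr_plus)
  finally show 1: "(\<integral>\<^sup>+y. G (y - x) \<partial>lebesgue) = integral\<^sup>N lborel G" .
  have "(\<integral>\<^sup>+y. G (x - y) \<partial>lebesgue) = (\<integral>\<^sup>+y. G (y - x) \<partial>lebesgue)"
    using sym[of "y - x" for y] by (simp add: minus_diff_eq)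
  then show "(\<integral>\<^sup>+y. G (x - y) \<partial>lebesgue) = integral\<^sup>N lborel G" using 1 by simp
qed

lemma closed_leb: "closed S \<Longrightarrow> S \<in> sets lebesgue"
  by (metis borel_closed sets_completionI_sets sets_lborel)

lemma prod_int_fst:
  fixes G :: "'a::euclidean_space \<Rightarrow> ennreal"
  assumes G[measurable]: "G \<in> borel_measurable borel" and sym: "\<And>h. G (- h) = G h"
    and S: "S \<in> sets lebesgue"
  shows "(\<integral>\<^sup>+z. indicator S (fst z) * G (fst z - snd z) \<partial>MM) = integral\<^sup>N lborel G * emeasure lebesgue S"
proof -
  have Sm: "(\<lambda>z::'a\<times>'a. indicator S (fst z) :: ennreal) \<in> borel_measurable MM"
    using meas_fst[of "indicator S"] S by (auto intro: borel_measurable_indicator)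
  have Gm: "(\<lambda>z::'a\<times>'a. G (fst z - snd z)) \<in> borel_measurable MM"
    by (rule measurable_compose[OF meas_diff_pair G])
  have "(\<integral>\<^sup>+z. indicator S (fst z) * G (fst z - snd z) \<partial>MM) = (\<integral>\<^sup>+x. \<integral>\<^sup>+y. indicator S x * G (x - y) \<partial>lebesgue \<partial>lebesgue)"
    using leb.nn_integral_fst[of "\<lambda>z. indicator S (fst z) * G (fst z - snd z)" lebesgue] Sm Gm
    by (simp add: borel_measurable_times_ennreal)
  also have "\<dots> = (\<integral>\<^sup>+x. indicator S x * integral\<^sup>N lborel G \<partial>lebesgue)"
  proof (rule nn_integral_cong)
    fix x :: 'a
    have "(\<lambda>y. G (x - y)) \<in> borel_measurable lebesgue"
      using measurable_compose[OF _ G, of "\<lambda>y. x - y" lebesgue] meas_id_leb by measurable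
    then have "(\<integral>\<^sup>+y. indicator S x * G (x - y) \<partial>lebesgue) = indicator S x * (\<integral>\<^sup>+y. G (x - y) \<partial>lebesgue)"
      by (rule nn_integral_cmult)
    then show "(\<integral>\<^sup>+y. indicator S x * G (x - y) \<partial>lebesgue) = indicator S x * integral\<^sup>N lborel G"
      using transl(2)[OF G sym, of x] by simp
  qed
  also have "\<dots> = integral\<^sup>N lborel G * emeasure lebesgue S"
    using nn_integral_cmult_indicator[OF S, of "integral\<^sup>N lborel G"] by (simp only: mult.commute)
  finally show ?thesis .
qed

lemma prod_int_snd:
  fixes G :: "'a::euclidean_space \<Rightarrow> ennreal"
  assumes G[measurable]: "G \<in> borel_measurable borel" and sym: "\<And>h. G (- h) = G h"
    and S: "S \<in> sets lebesgue"
  shows "(\<integral>\<^sup>+z. indicator S (snd z) * G (fst z - snd z) \<partial>MM) = integral\<^sup>N lborel G * emeasure lebesgue S"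
proof -
  have Sm: "(\<lambda>z::'a\<times>'a. indicator S (snd z) :: ennreal) \<in> borel_measurable MM"
    using meas_snd[of "indicator S"] S by (auto intro: borel_measurable_indicator)
  have Gm: "(\<lambda>z::'a\<times>'a. G (fst z - snd z)) \<in> borel_measurable MM"
    by (rule measurable_compose[OF meas_diff_pair G])
  have "(\<integral>\<^sup>+z. indicator S (snd z) * G (fst z - snd z) \<partial>MM) = (\<integral>\<^sup>+y. \<integral>\<^sup>+x. indicator S y * G (x - y) \<partial>lebesgue \<partial>lebesgue)"
    using leb_pair.nn_integral_snd[of "\<lambda>z. indicator S (snd z) * G (fst z - snd z)"] Sm Gm
    by (simp add: borel_measurable_times_ennreal)
  also have "\<dots> = (\<integral>\<^sup>+y. indicator S y * integral\<^sup>N lborel G \<partial>lebesgue)"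
  proof (rule nn_integral_cong)
    fix y :: 'a
    have "(\<lambda>x. G (x - y)) \<in> borel_measurable lebesgue"
      using measurable_compose[OF _ G, of "\<lambda>x. x - y" lebesgue] meas_id_leb by measurable
    then have "(\<integral>\<^sup>+x. indicator S y * G (x - y) \<partial>lebesgue) = indicator S y * (\<integral>\<^sup>+x. G (x - y) \<partial>lebesgue)"
      by (rule nn_integral_cmult)
    then show "(\<integral>\<^sup>+x. indicator S y * G (x - y) \<partial>lebesgue) = indicator S y * integral\<^sup>N lborel G"
      using transl(1)[OF G sym, of y] by simp
  qed
  also have "\<dots> = integral\<^sup>N lborel G * emeasure lebesgue S"
    using nn_integral_cmult_indicator[OF S, of "integral\<^sup>N lborel G"] by (simp only: mult.commute)
  finally show ?thesis .
qed

lemma gag_Cc_finite: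
  fixes \<phi> :: "'a::euclidean_space \<Rightarrow> real"
  assumes s: "0 < s" "s < 1" and \<phi>: "Cc_inf \<Omega> \<phi>"
  shows "gag_sq s \<Omega> \<phi> < \<infinity>"
proof -
  obtain L0 where L0: "\<And>x y. \<bar>\<phi> x - \<phi> y\<bar> \<le> L0 * norm (x - y)" using Cc_props(3)[OF \<phi>] by blast
  define L where "L = max L0 0"
  have L: "\<And>x y. \<bar>\<phi> x - \<phi> y\<bar> \<le> L * norm (x - y)" "L \<ge> 0"
  proof -
    fix x y :: 'a
    have "L0 * norm (x - y) \<le> L * norm (x - y)" unfolding L_def by (intro mult_right_mono) auto
    then show "\<bar>\<phi> x - \<phi> y\<bar> \<le> L * norm (x - y)" using L0[of x y] by linarith
  qed (simp add: L_def)
  obtain M where M: "\<And>x. \<bar>\<phi> x\<bar> \<le> M" using Cc_props(2)[OF \<phi>] by blast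
  have M0: "M \<ge> 0" using M[of 0] by simp
  define S where "S = closure {x. \<phi> x \<noteq> 0}"
  have Sc: "compact S" using \<phi> by (simp add: Cc_inf_def S_def)
  have Sm: "S \<in> sets lebesgue" using Sc by (intro closed_leb compact_imp_closed)
  have out: "\<phi> x = 0" if "x \<notin> S" for x using that closure_subset[of "{x. \<phi> x \<noteq> 0}"] by (auto simp: S_def)
  define N where "N = real DIM('a)"
  define a where "a = 2 - N - 2 * s"
  define b where "b = - N - 2 * s"
  define G where "G h = ennreal (L\<^sup>2) * ennreal (indicator (ball (0::'a) 1) h * norm h powr a)
      + ennreal (4 * M\<^sup>2) * ennreal (indicator (- ball (0::'a) 1) h * norm h powr b)" for h
  have [measurable]: "ball (0::'a) 1 \<in> sets borel" "- ball (0::'a) 1 \<in> sets borel" by auto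
  have [measurable]: "(\<lambda>x::'a. norm x powr c) \<in> borel_measurable borel" for c
    by (rule powr_real_measurable) auto
  have Gm[measurable]: "G \<in> borel_measurable borel" unfolding G_def by measurable
  have Gs: "G (- h) = G h" for h by (simp add: G_def indicator_def)
  have IG: "integral\<^sup>N lborel G < \<infinity>"
  proof -
    have "integral\<^sup>N lborel G = ennreal (L\<^sup>2) * (\<integral>\<^sup>+h. ennreal (indicator (ball (0::'a) 1) h * norm h powr a) \<partial>lborel)
       + ennreal (4 * M\<^sup>2) * (\<integral>\<^sup>+h. ennreal (indicator (- ball (0::'a) 1) h * norm h powr b) \<partial>lborel)"
      unfolding G_def by (simp add: nn_integral_add nn_integral_cmult)
    moreover have "(\<integral>\<^sup>+h. ennreal (indicator (ball (0::'a) 1) h * norm h powr a) \<partial>lborel) < \<infinity>"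
      using s by (intro near_finite) (simp add: a_def N_def)
    moreover have "(\<integral>\<^sup>+h. ennreal (indicator (- ball (0::'a) 1) h * norm h powr b) \<partial>lborel) < \<infinity>"
      using s by (intro far_finite) (simp add: b_def N_def)
    ultimately show ?thesis by (simp add: ennreal_mult_less_top)
  qed
  have pt: "indicator (D_set \<Omega>) z * ennreal ((\<phi> (fst z) - \<phi> (snd z))\<^sup>2 / norm (fst z - snd z) powr (real DIM('a) + 2 * s))
      \<le> indicator S (fst z) * G (fst z - snd z) + indicator S (snd z) * G (fst z - snd z)" for z :: "'a \<times> 'a"
  proof (cases "(fst z \<in> S \<or> snd z \<in> S) \<and> fst z \<noteq> snd z")
    case False
    then have "\<phi> (fst z) - \<phi> (snd z) = 0" using out by auto
    then show ?thesis by simp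
  next
    case True
    define h where "h = fst z - snd z"
    have h0: "norm h > 0" using True by (simp add: h_def)
    have kp: "norm h powr (N + 2 * s) > 0" using h0 by simp
    have "(\<phi> (fst z) - \<phi> (snd z))\<^sup>2 / norm h powr (N + 2 * s) \<le>
        L\<^sup>2 * (indicator (ball (0::'a) 1) h * norm h powr a) + 4 * M\<^sup>2 * (indicator (- ball (0::'a) 1) h * norm h powr b)"
    proof (cases "norm h < 1")
      case True
      have "\<bar>\<phi> (fst z) - \<phi> (snd z)\<bar> \<le> L * norm h" using L by (simp add: h_def)
      then have "(\<phi> (fst z) - \<phi> (snd z))\<^sup>2 \<le> (L * norm h)\<^sup>2" using L h0 by (metis abs_le_square_iff abs_of_nonneg mult_nonneg_nonneg norm_ge_zero)
      then have "(\<phi> (fst z) - \<phi> (snd z))\<^sup>2 / norm h powr (N + 2 * s) \<le> (L * norm h)\<^sup>2 / norm h powr (N + 2 * s)"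
        using kp by (intro divide_right_mono) auto
      also have "\<dots> = L\<^sup>2 * (norm h powr 2 / norm h powr (N + 2 * s))"
        using h0 by (simp add: power_mult_distrib)
      also have "\<dots> = L\<^sup>2 * norm h powr a"
      proof -
        have eq: "norm h powr 2 / norm h powr (N + 2 * s) = norm h powr a"
          unfolding a_def by (subst powr_diff[symmetric]) (simp add: algebra_simps)
        show ?thesis by (simp only: eq)
      qed
      finally show ?thesis using True by simp
    next
      case False
      have "\<bar>\<phi> (fst z) - \<phi> (snd z)\<bar> \<le> 2 * M" using M[of "fst z"] M[of "snd z"] by linarith
      then have "(\<phi> (fst z) - \<phi> (snd z))\<^sup>2 \<le> (2 * M)\<^sup>2" using M0 by (metis abs_le_square_iff abs_of_nonneg mult_nonneg_nonneg zero_le_numeral)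
      then have "(\<phi> (fst z) - \<phi> (snd z))\<^sup>2 / norm h powr (N + 2 * s) \<le> (2 * M)\<^sup>2 / norm h powr (N + 2 * s)"
        using kp by (intro divide_right_mono) auto
      also have "\<dots> = 4 * M\<^sup>2 * norm h powr b"
      proof -
        have "norm h powr b = 1 / norm h powr (N + 2 * s)"
          unfolding b_def by (subst powr_minus_divide[symmetric]) (simp add: algebra_simps)
        then show ?thesis by (simp add: power_mult_distrib)
      qed
      finally show ?thesis using False by simp
    qed
    then have "ennreal ((\<phi> (fst z) - \<phi> (snd z))\<^sup>2 / norm (fst z - snd z) powr (real DIM('a) + 2 * s))
       \<le> ennreal (L\<^sup>2 * (indicator (ball (0::'a) 1) h * norm h powr a) + 4 * M\<^sup>2 * (indicator (- ball (0::'a) 1) h * norm h powr b))"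
      unfolding h_def[symmetric] N_def[symmetric] by (rule ennreal_leI)
    also have "\<dots> = G h" unfolding G_def by (rule ennreal_lin2) auto
    finally have "ennreal ((\<phi> (fst z) - \<phi> (snd z))\<^sup>2 / norm (fst z - snd z) powr (real DIM('a) + 2 * s)) \<le> G h" .
    moreover have "G h \<le> indicator S (fst z) * G h + indicator S (snd z) * G h"
      using True by (auto simp: indicator_def)
    moreover have "indicator (D_set \<Omega>) z * ennreal ((\<phi> (fst z) - \<phi> (snd z))\<^sup>2 / norm (fst z - snd z) powr (real DIM('a) + 2 * s))
        \<le> ennreal ((\<phi> (fst z) - \<phi> (snd z))\<^sup>2 / norm (fst z - snd z) powr (real DIM('a) + 2 * s))"
      by (auto simp: indicator_def)
    ultimately show ?thesis unfolding h_def by (meson order_trans)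
  qed
  have "gag_sq s \<Omega> \<phi> \<le> (\<integral>\<^sup>+z. indicator S (fst z) * G (fst z - snd z) + indicator S (snd z) * G (fst z - snd z) \<partial>MM)"
    unfolding gag_sq_def by (intro nn_integral_mono pt)
  also have "\<dots> = (\<integral>\<^sup>+z. indicator S (fst z) * G (fst z - snd z) \<partial>MM) + (\<integral>\<^sup>+z. indicator S (snd z) * G (fst z - snd z) \<partial>MM)"
  proof (rule nn_integral_add)
    have Gm2: "(\<lambda>z::'a\<times>'a. G (fst z - snd z)) \<in> borel_measurable MM"
      by (rule measurable_compose[OF meas_diff_pair Gm])
    show "(\<lambda>z. indicator S (fst z) * G (fst z - snd z)) \<in> borel_measurable MM"
      using meas_fst[of "indicator S"] Sm Gm2 by (auto intro!: borel_measurable_times_ennreal borel_measurable_indicator)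
    show "(\<lambda>z. indicator S (snd z) * G (fst z - snd z)) \<in> borel_measurable MM"
      using meas_snd[of "indicator S"] Sm Gm2 by (auto intro!: borel_measurable_times_ennreal borel_measurable_indicator)
  qed
  also have "\<dots> = integral\<^sup>N lborel G * emeasure lebesgue S + integral\<^sup>N lborel G * emeasure lebesgue S"
    by (simp only: prod_int_fst[OF Gm Gs Sm] prod_int_snd[OF Gm Gs Sm])
  also have "\<dots> < \<infinity>"
  proof -
    have "emeasure lebesgue S < \<infinity>"
    proof -
      have "S \<in> sets lborel" using Sc by (simp add: borel_closed compact_imp_closed)
      then show ?thesis using emeasure_compact_finite[OF Sc] by (simp add: emeasure_completion)
    qed
    then show ?thesis using IG by (simp add: ennreal_mult_less_top)
  qed
  finally show ?thesis .
qed

lemma sq_sum_le: "(x + y)\<^sup>2 \<le> 2 * x\<^sup>2 + 2 * (y::real)\<^sup>2"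
  using sq_diff_le[of x "- y"] by simp

lemma loc_pt:
  fixes a b fx fy c p k Mf :: real
  assumes c: "c > 0" and p: "p \<ge> 1" and a: "0 \<le> a" "a \<le> k" and b: "0 \<le> b" "b \<le> k"
    and fx: "\<bar>fx\<bar> \<le> Mf" and fy: "\<bar>fy\<bar> \<le> Mf"
    and ca: "fx \<noteq> 0 \<Longrightarrow> a \<ge> c" and cb: "fy \<noteq> 0 \<Longrightarrow> b \<ge> c"
  shows "(a * fx - b * fy)\<^sup>2 \<le> 2 * (Mf / c powr (p - 1))\<^sup>2 * (a powr p - b powr p)\<^sup>2 + 2 * k\<^sup>2 * (fx - fy)\<^sup>2"
proof -
  define A where "A = Mf / c powr (p - 1)"
  have cp: "c powr (p - 1) > 0" using c by simp
  have Mf0: "Mf \<ge> 0" using fx by linarith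
  have key: "\<bar>a - b\<bar> * Mf \<le> A * \<bar>a powr p - b powr p\<bar>" if "c \<le> a \<or> c \<le> b"
  proof -
    have "c powr (p - 1) * \<bar>a - b\<bar> \<le> \<bar>a powr p - b powr p\<bar>"
    proof (cases "c \<le> a")
      case True then show ?thesis using conc_lemma[of c a b p] c b p by simp
    next
      case False
      then have "c \<le> b" using that by simp
      then have "c powr (p - 1) * \<bar>b - a\<bar> \<le> \<bar>b powr p - a powr p\<bar>" using conc_lemma[of c b a p] c a p by simp
      then show ?thesis by (simp add: abs_minus_commute)
    qed
    then have "\<bar>a - b\<bar> \<le> \<bar>a powr p - b powr p\<bar> / c powr (p - 1)" using cp by (simp add: field_simps)
    then have "\<bar>a - b\<bar> * Mf \<le> \<bar>a powr p - b powr p\<bar> / c powr (p - 1) * Mf" using Mf0 by (rule mult_right_mono)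
    then show ?thesis by (simp add: A_def mult.commute)
  qed
  have A0: "A \<ge> 0" using Mf0 cp by (simp add: A_def)
  show ?thesis
  proof (cases "fx = 0 \<and> fy = 0")
    case True then show ?thesis by simp
  next
    case False
    then consider "fx \<noteq> 0" | "fy \<noteq> 0" by blast
    then show ?thesis
    proof cases
      case 1
      have e: "a * fx - b * fy = (a - b) * fx + b * (fx - fy)" by (simp add: algebra_simps)
      have t1: "\<bar>(a - b) * fx\<bar> \<le> A * \<bar>a powr p - b powr p\<bar>"
      proof -
        have "\<bar>(a - b) * fx\<bar> \<le> \<bar>a - b\<bar> * Mf" using fx by (simp add: abs_mult mult_left_mono)
        also have "\<dots> \<le> A * \<bar>a powr p - b powr p\<bar>" using key ca[OF 1] by simp
        finally show ?thesis .
      qed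
      have t2: "\<bar>b * (fx - fy)\<bar> \<le> k * \<bar>fx - fy\<bar>" using b by (simp add: abs_mult mult_right_mono)
      have "((a - b) * fx)\<^sup>2 \<le> (A * \<bar>a powr p - b powr p\<bar>)\<^sup>2" using t1 by (simp add: abs_le_square_iff[symmetric] abs_mult A0)
      moreover have "(b * (fx - fy))\<^sup>2 \<le> (k * \<bar>fx - fy\<bar>)\<^sup>2" using t2 b by (simp add: abs_le_square_iff[symmetric] abs_mult)
      ultimately show ?thesis unfolding e A_def[symmetric]
        using sq_sum_le[of "(a - b) * fx" "b * (fx - fy)"] by (simp add: power_mult_distrib)
    next
      case 2
      have e: "a * fx - b * fy = (a - b) * fy + a * (fx - fy)" by (simp add: algebra_simps)
      have t1: "\<bar>(a - b) * fy\<bar> \<le> A * \<bar>a powr p - b powr p\<bar>"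
      proof -
        have "\<bar>(a - b) * fy\<bar> \<le> \<bar>a - b\<bar> * Mf" using fy by (simp add: abs_mult mult_left_mono)
        also have "\<dots> \<le> A * \<bar>a powr p - b powr p\<bar>" using key cb[OF 2] by simp
        finally show ?thesis .
      qed
      have t2: "\<bar>a * (fx - fy)\<bar> \<le> k * \<bar>fx - fy\<bar>" using a by (simp add: abs_mult mult_right_mono)
      have "((a - b) * fy)\<^sup>2 \<le> (A * \<bar>a powr p - b powr p\<bar>)\<^sup>2" using t1 by (simp add: abs_le_square_iff[symmetric] abs_mult A0)
      moreover have "(a * (fx - fy))\<^sup>2 \<le> (k * \<bar>fx - fy\<bar>)\<^sup>2" using t2 a by (simp add: abs_le_square_iff[symmetric] abs_mult)
      ultimately show ?thesis unfolding e A_def[symmetric]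
        using sq_sum_le[of "(a - b) * fy" "a * (fx - fy)"] by (simp add: power_mult_distrib)
    qed
  qed
qed

lemma enn2real_le_lin2:
  assumes "a \<le> ennreal A * b + ennreal B * c" "b < \<infinity>" "c < \<infinity>" "A \<ge> 0" "B \<ge> 0"
  shows "enn2real a \<le> A * enn2real b + B * enn2real c"
proof -
  have fin: "ennreal A * b + ennreal B * c < \<infinity>" using assms by (simp add: ennreal_mult_less_top)
  have "enn2real a \<le> enn2real (ennreal A * b + ennreal B * c)"
    using assms(1) fin by (intro enn2real_mono) auto
  also have "\<dots> = A * enn2real b + B * enn2real c"
    using assms by (simp add: enn2real_plus enn2real_mult ennreal_mult_less_top)
  finally show ?thesis .
qed

lemma case_iib:
  fixes w :: "nat \<Rightarrow> 'a::euclidean_space \<Rightarrow> real" and \<Omega> :: "'a set"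
  assumes \<Omega>: "open \<Omega>" "bounded \<Omega>" "\<Omega> \<noteq> {}" and s: "0 < s" "s < 1"
    and q: "q > 0" and \<gamma>: "1 < \<gamma>" and k: "k > 0"
    and Kpos: "\<forall>x\<in>\<Omega>. K x > 0"
    and f: "set_integrable lebesgue \<Omega> f" "AE x in lebesgue. x \<in> \<Omega> \<longrightarrow> f x \<ge> 0"
    and \<mu>: "set_integrable lebesgue \<Omega> \<mu>" "AE x in lebesgue. x \<in> \<Omega> \<longrightarrow> \<mu> x \<ge> 0"
    and sol: "\<forall>n\<ge>1. (AE x in lebesgue. x \<in> \<Omega> \<longrightarrow> w n x > 0) \<and> weak_energy_sol s \<Omega> (Fn K q \<gamma> f \<mu> n) (w n)"
  shows "bounded_Xloc s \<Omega> (\<lambda>n x. trunc k (w n x))"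
proof -
  define p where "p = (\<gamma> + 1) / 2"
  have p1: "p \<ge> 1" using \<gamma> by (simp add: p_def)
  obtain Mv where Mv: "\<And>n. n \<ge> 1 \<Longrightarrow> X0 s \<Omega> (\<lambda>x. trunc k (w n x) powr p) \<and>
            enn2real (gag_sq s \<Omega> (\<lambda>x. trunc k (w n x) powr p)) \<le> Mv"
    using case_iia[OF \<Omega> s q \<gamma> k Kpos f \<mu> sol] unfolding p_def by blast
  have \<Omega>m: "\<Omega> \<in> sets lebesgue" using \<Omega>(1) by (rule open_leb)
  have sol1: "weak_energy_sol s \<Omega> (Fn K q \<gamma> f \<mu> 1) (w 1)" and pos1: "AE x in lebesgue. x \<in> \<Omega> \<longrightarrow> w 1 x > 0"
    using sol by auto
  show ?thesis unfolding bounded_Xloc_def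
  proof (intro allI impI)
    fix \<phi> :: "'a \<Rightarrow> real" assume \<phi>: "Cc_inf \<Omega> \<phi>"
    define S where "S = closure {x. \<phi> x \<noteq> 0}"
    have Sc: "compact S" and SO: "S \<subseteq> \<Omega>" using \<phi> by (auto simp: Cc_inf_def S_def)
    have inS: "\<phi> x \<noteq> 0 \<Longrightarrow> x \<in> S" for x using closure_subset[of "{x. \<phi> x \<noteq> 0}"] by (auto simp: S_def)
    obtain c where c: "c > 0" "AE x in lebesgue. x \<in> S \<longrightarrow> w 1 x \<ge> c"
      using sol1 Sc SO unfolding weak_energy_sol_def by blast
    define c' where "c' = min c k"
    have c': "c' > 0" using c k by (simp add: c'_def)
    obtain Mf where Mf: "\<And>x. \<bar>\<phi> x\<bar> \<le> Mf" using Cc_props(2)[OF \<phi>] by blast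
    have g\<phi>: "gag_sq s \<Omega> \<phi> < \<infinity>" by (rule gag_Cc_finite[OF s \<phi>])
    have \<phi>b: "\<phi> \<in> borel_measurable borel"
      using Cc_props(1)[OF \<phi>] by (rule borel_measurable_continuous_onI)
    have \<phi>m[measurable]: "\<phi> \<in> borel_measurable lebesgue"
      using measurable_compose[OF meas_id_leb \<phi>b] by simp
    define A2 where "A2 = 2 * (Mf / c' powr (p - 1))\<^sup>2"
    define B2 where "B2 = 2 * k\<^sup>2"
    have A2: "A2 \<ge> 0" and B2: "B2 \<ge> 0" by (simp_all add: A2_def B2_def)
    show "bounded_X0 s \<Omega> (\<lambda>n x. trunc k (w n x) * \<phi> x)"
      unfolding bounded_X0_def
    proof (intro exI allI impI conjI)
      fix n :: nat assume n: "n \<ge> 1"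
      have soln: "weak_energy_sol s \<Omega> (Fn K q \<gamma> f \<mu> n) (w n)" and posn: "AE x in lebesgue. x \<in> \<Omega> \<longrightarrow> w n x > 0"
        using sol n by auto
      have Xn: "X0 s \<Omega> (w n)" and zn: "\<forall>x. x \<notin> \<Omega> \<longrightarrow> w n x = 0"
        using soln unfolding weak_energy_sol_def by blast+
      have [measurable]: "w n \<in> borel_measurable lebesgue" using Xn by (simp add: X0_def)
      have cmp: "AE x in lebesgue. x \<in> \<Omega> \<longrightarrow> w 1 x \<le> w n x"
        by (rule comparison[OF \<Omega>(1) n s sol1 soln pos1 posn Kpos q _ f(2) \<mu>(2)]) (use \<gamma> in simp)
      have P: "AE x in lebesgue. w n x \<ge> 0 \<and> (\<phi> x \<noteq> 0 \<longrightarrow> trunc k (w n x) \<ge> c')"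
        using w_nonneg_AE[OF posn zn] cmp c(2)
      proof eventually_elim
        case (elim x)
        show ?case
        proof (intro conjI impI)
          show "w n x \<ge> 0" using elim by simp
          assume "\<phi> x \<noteq> 0"
          then have "x \<in> S" "x \<in> \<Omega>" using inS SO by auto
          then have "w n x \<ge> c" using elim by force
          then show "trunc k (w n x) \<ge> c'" using c k by (simp add: c'_def trunc_def)
        qed
      qed
      define v where "v x = trunc k (w n x) powr p" for x
      define u where "u x = trunc k (w n x) * \<phi> x" for x
      have vm: "v \<in> borel_measurable lebesgue" unfolding v_def trunc_def by measurable
      have um: "u \<in> borel_measurable lebesgue" unfolding u_def trunc_def by measurable
      have u0: "AE x in lebesgue. x \<notin> \<Omega> \<longrightarrow> u x = 0" using zn k by (auto simp: u_def trunc_0)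
      have pair: "AE z in MM. z \<in> D_set \<Omega> \<longrightarrow> (u (fst z) - u (snd z))\<^sup>2 \<le> A2 * (v (fst z) - v (snd z))\<^sup>2 + B2 * (\<phi> (fst z) - \<phi> (snd z))\<^sup>2"
        using AE_pair_both[OF P]
      proof eventually_elim
        case (elim z)
        have "(trunc k (w n (fst z)) * \<phi> (fst z) - trunc k (w n (snd z)) * \<phi> (snd z))\<^sup>2
           \<le> 2 * (Mf / c' powr (p - 1))\<^sup>2 * (trunc k (w n (fst z)) powr p - trunc k (w n (snd z)) powr p)\<^sup>2 + 2 * k\<^sup>2 * (\<phi> (fst z) - \<phi> (snd z))\<^sup>2"
          using elim k by (intro loc_pt[OF c' p1 _ _ _ _ Mf Mf]) (auto simp: trunc_def)
        then show ?case by (simp add: u_def v_def A2_def B2_def)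
      qed
      have gu: "gag_sq s \<Omega> u \<le> ennreal A2 * gag_sq s \<Omega> v + ennreal B2 * gag_sq s \<Omega> \<phi>"
        by (rule gag_le2[OF \<Omega>m vm um \<phi>m A2 B2 pair])
      have Xv: "X0 s \<Omega> v" using Mv[OF n] by (simp add: v_def[abs_def])
      have gv: "gag_sq s \<Omega> v < \<infinity>" using Xv by (simp add: X0_def)
      have "gag_sq s \<Omega> u < \<infinity>"
        using gu gv g\<phi> by (auto intro: le_less_trans simp: ennreal_mult_less_top)
      then have Xu: "X0 s \<Omega> u" using um u0 by (simp add: X0_def)
      then show "X0 s \<Omega> (\<lambda>x. trunc k (w n x) * \<phi> x)" by (simp add: u_def[abs_def])
      have "enn2real (gag_sq s \<Omega> u) \<le> A2 * enn2real (gag_sq s \<Omega> v) + B2 * enn2real (gag_sq s \<Omega> \<phi>)"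
        by (rule enn2real_le_lin2[OF gu gv g\<phi> A2 B2])
      also have "\<dots> \<le> A2 * Mv + B2 * enn2real (gag_sq s \<Omega> \<phi>)"
        using Mv[OF n] A2 by (intro add_right_mono mult_left_mono) (auto simp: v_def[abs_def])
      finally have "X0_norm s \<Omega> u \<le> sqrt (A2 * Mv + B2 * enn2real (gag_sq s \<Omega> \<phi>))"
        by (simp add: X0_norm_def)
      then show "X0_norm s \<Omega> (\<lambda>x. trunc k (w n x) * \<phi> x) \<le> sqrt (A2 * Mv + B2 * enn2real (gag_sq s \<Omega> \<phi>))"
        by (simp add: u_def[abs_def])
    qed
  qed
qed

theorem proposition2:
  fixes \<Omega> :: "'a::euclidean_space set"
    and s q \<gamma> \<theta> \<beta> C1 C2 :: real
    and f \<mu> K :: "'a \<Rightarrow> real"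
    and w :: "nat \<Rightarrow> 'a \<Rightarrow> real"
  assumes dom: "open \<Omega>" "bounded \<Omega>" "connected \<Omega>" "\<Omega> \<noteq> {}" "smooth_boundary \<Omega>"
    and s: "0 < s" "s < 1" "real DIM('a) > 2 * s"
    and cvx: "s < 1/2 \<Longrightarrow> convex \<Omega>"
    and q: "q > 0" and \<gamma>: "\<gamma> > 0"
    and f: "set_integrable lebesgue \<Omega> f" "AE x in lebesgue. x \<in> \<Omega> \<longrightarrow> f x \<ge> 0"
    and \<mu>: "set_integrable lebesgue \<Omega> \<mu>" "AE x in lebesgue. x \<in> \<Omega> \<longrightarrow> \<mu> x \<ge> 0"
    and \<theta>: "0 < \<theta>" "\<theta> < 1" and K_hold: "holder_loc \<theta> \<Omega> K"
    and K_bd: "C1 > 0" "C2 > 0"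
      "\<forall>x\<in>\<Omega>. C1 * bdist \<Omega> x powr (- \<beta>) \<le> K x \<and> K x \<le> C2 * bdist \<Omega> x powr (- \<beta>)"
    and \<beta>: "0 \<le> \<beta>" "\<beta> < 2 * s"
    and regime: "(0 < \<beta> / s + q \<and> \<beta> / s + q < 1) \<or>
                 (\<beta> / s + q > 1 \<and> 2 * \<beta> + q * (2 * s - 1) < 2 * s + 1)"
    and sol: "\<forall>n\<ge>1. class_C s \<beta> q \<Omega> (w n) \<and>
      (AE x in lebesgue. x \<in> \<Omega> \<longrightarrow> w n x > 0) \<and>
      weak_energy_sol s \<Omega>
        (\<lambda>x t. K x * t powr (- q) + trunc (real n) (f x) / (t + 1 / real n) powr \<gamma>
               + trunc (real n) (\<mu> x)) (w n)"
  shows "\<forall>k>0.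
     (\<gamma> \<le> 1 \<longrightarrow> bounded_X0 s \<Omega> (\<lambda>n x. trunc k (w n x))) \<and>
     (\<gamma> > 1 \<longrightarrow> bounded_X0 s \<Omega> (\<lambda>n x. trunc k (w n x) powr ((\<gamma> + 1) / 2)) \<and>
                 bounded_Xloc s \<Omega> (\<lambda>n x. trunc k (w n x)))"
proof -
  have Kpos: "\<forall>x\<in>\<Omega>. K x > 0"
  proof
    fix x assume x: "x \<in> \<Omega>"
    have "bdist \<Omega> x > 0" by (rule bdist_pos[OF dom(1,2,4) x])
    then have "C1 * bdist \<Omega> x powr (- \<beta>) > 0" using K_bd(1) by simp
    then show "K x > 0" using K_bd(3) x by fastforce
  qed
  have sol': "\<forall>n\<ge>1. (AE x in lebesgue. x \<in> \<Omega> \<longrightarrow> w n x > 0) \<and> weak_energy_sol s \<Omega> (Fn K q \<gamma> f \<mu> n) (w n)"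
    using sol unfolding Fn_def by blast
  show ?thesis
  proof (intro allI impI conjI)
    fix k :: real assume k: "k > 0"
    show "\<gamma> \<le> 1 \<Longrightarrow> bounded_X0 s \<Omega> (\<lambda>n x. trunc k (w n x))"
      using case_i[OF dom(1,2,4) s(1,2) q \<gamma> _ k Kpos f \<mu> sol'] by simp
    assume g: "\<gamma> > 1"
    show "bounded_Xloc s \<Omega> (\<lambda>n x. trunc k (w n x))"
      by (rule case_iib[OF dom(1,2,4) s(1,2) q g k Kpos f \<mu> sol'])
    obtain M where M: "\<And>n. n \<ge> 1 \<Longrightarrow> X0 s \<Omega> (\<lambda>x. trunc k (w n x) powr ((\<gamma> + 1) / 2)) \<and>
            enn2real (gag_sq s \<Omega> (\<lambda>x. trunc k (w n x) powr ((\<gamma> + 1) / 2))) \<le> M"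
      using case_iia[OF dom(1,2,4) s(1,2) q g k Kpos f \<mu> sol'] by blast
    show "bounded_X0 s \<Omega> (\<lambda>n x. trunc k (w n x) powr ((\<gamma> + 1) / 2))"
      unfolding bounded_X0_def
    proof (intro exI allI impI conjI)
      fix n :: nat assume n: "n \<ge> 1"
      show "X0 s \<Omega> (\<lambda>x. trunc k (w n x) powr ((\<gamma> + 1) / 2))" using M[OF n] by simp
      show "X0_norm s \<Omega> (\<lambda>x. trunc k (w n x) powr ((\<gamma> + 1) / 2)) \<le> sqrt M"
        using M[OF n] by (simp add: X0_norm_def)
    qed
  qed
qed


end
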